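(* Let $b\ge 1$ be an integer and $\mathbf M$ an ergodic channel. For each $n$, let $\Lambda(n)$ be the spectral gap of the Glauber dynamics for the tree-process measure on the $n$-level $b$-ary tree. If $\inf_n\Lambda(n)>0$, then the mutual information between the root label $\sigma_\rho$ and the level-$n$ configuration $\sigma_n$ of $T_b$ decays exponentially: there exist $C,c>0$ with $I(\sigma_\rho,\sigma_n)\le C e^{-cn}$ for all $n$. In particular, the reconstruction problem for $T_b$ and $\mathbf M$ is not solvable.
   Context: Tree process on a rooted tree with root $\rho$: the root label is drawn from an initial distribution (here the stationary distribution of $\mathbf M$), and each non-root vertex $v$ with parent $v'$ receives label $j$ with probability $\mathbf M_{\sigma_{v'},j}$, independently across edges given parent labels. $T_b$ is the infinite rooted tree in which every vertex has exactly $b$ children; the $n$-level $b$-ary tree is its restriction to vertices at distance at most $n$ from $\rho$, and $\mu_n$ is the law of the tree process on it. Glauber dynamics for $\mu_n$ is the continuous-time Markov chain on configurations in which each vertex $v$, at rate $1$, has its label replaced by a fresh label drawn from the conditional law under $\mu_n$ of $\sigma_v$ given $(\sigma_w)_{w\ne v}$; it is reversible with respect to $\mu_n$, and $\Lambda(n)$ is its spectral gap. $L_n$ is the set of vertices at distance $n$ from $\rho$, $\sigma_n=(\sigma_v)_{v\in L_n}$. With $\mathbf P_n^\ell$ the conditional law of $\sigma_n$ given $\sigma_\rho=\ell$ and $D_V(P,Q)=\frac12\sum|P-Q|$, the reconstruction problem is solvable if there exist $i,j$ with $\lim_n D_V(\mathbf P_n^i,\mathbf P_n^j)>0$. *)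

theory Defs
  imports Complex_Main "HOL-Library.FuncSet"
begin

definition stochastic :: "nat \<Rightarrow> (nat \<Rightarrow> nat \<Rightarrow> real) \<Rightarrow> bool" where
  "stochastic q M \<longleftrightarrow> (\<forall>i<q. \<forall>j<q. 0 \<le> M i j) \<and> (\<forall>i<q. (\<Sum>j<q. M i j) = 1)"

fun mpow :: "nat \<Rightarrow> (nat \<Rightarrow> nat \<Rightarrow> real) \<Rightarrow> nat \<Rightarrow> nat \<Rightarrow> nat \<Rightarrow> real" where
  "mpow q M 0 = (\<lambda>i j. if i = j then 1 else 0)"
| "mpow q M (Suc k) = (\<lambda>i j. \<Sum>l<q. mpow q M k i l * M l j)"

definition irreducible_chain :: "nat \<Rightarrow> (nat \<Rightarrow> nat \<Rightarrow> real) \<Rightarrow> bool" where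
  "irreducible_chain q M \<longleftrightarrow> (\<forall>i<q. \<forall>j<q. \<exists>k. 0 < mpow q M k i j)"

definition aperiodic_chain :: "nat \<Rightarrow> (nat \<Rightarrow> nat \<Rightarrow> real) \<Rightarrow> bool" where
  "aperiodic_chain q M \<longleftrightarrow> (\<forall>i<q. Gcd {k. 0 < k \<and> 0 < mpow q M k i i} = 1)"

definition ergodic_channel :: "nat \<Rightarrow> (nat \<Rightarrow> nat \<Rightarrow> real) \<Rightarrow> bool" where
  "ergodic_channel q M \<longleftrightarrow> stochastic q M \<and> irreducible_chain q M \<and> aperiodic_chain q M"

definition stationary_dist :: "nat \<Rightarrow> (nat \<Rightarrow> nat \<Rightarrow> real) \<Rightarrow> (nat \<Rightarrow> real) \<Rightarrow> bool" where
  "stationary_dist q M p \<longleftrightarrow> (\<forall>i<q. 0 \<le> p i) \<and> (\<Sum>i<q. p i) = 1 \<and>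
     (\<forall>j<q. (\<Sum>i<q. p i * M i j) = p j)"

section \<open>The n-level b-ary tree; vertices are words over {0..<b}, root [], parent = butlast\<close>

definition tree_vertices :: "nat \<Rightarrow> nat \<Rightarrow> nat list set" where
  "tree_vertices b n = {v. length v \<le> n \<and> set v \<subseteq> {..<b}}"

definition level :: "nat \<Rightarrow> nat \<Rightarrow> nat list set" where
  "level b n = {v. length v = n \<and> set v \<subseteq> {..<b}}"

definition configs :: "nat \<Rightarrow> nat \<Rightarrow> nat \<Rightarrow> (nat list \<Rightarrow> nat) set" where
  "configs q b n = PiE (tree_vertices b n) (\<lambda>_. {..<q})"

definition tree_measure ::
  "nat \<Rightarrow> (nat \<Rightarrow> nat \<Rightarrow> real) \<Rightarrow> (nat \<Rightarrow> real) \<Rightarrow> nat \<Rightarrow> nat \<Rightarrow> (nat list \<Rightarrow> nat) \<Rightarrow> real" where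
  "tree_measure q M p b n \<sigma> =
     (if \<sigma> \<in> configs q b n
      then p (\<sigma> []) * (\<Prod>v\<in>tree_vertices b n - {[]}. M (\<sigma> (butlast v)) (\<sigma> v))
      else 0)"

text \<open>Jump rate from sigma to tau: each vertex v at rate 1 resamples its label from the
  conditional law of sigma_v given the other labels.\<close>
definition glauber_rate ::
  "nat \<Rightarrow> (nat \<Rightarrow> nat \<Rightarrow> real) \<Rightarrow> (nat \<Rightarrow> real) \<Rightarrow> nat \<Rightarrow> nat \<Rightarrow>
   (nat list \<Rightarrow> nat) \<Rightarrow> (nat list \<Rightarrow> nat) \<Rightarrow> real" where
  "glauber_rate q M p b n \<sigma> \<tau> =
     (\<Sum>v\<in>tree_vertices b n.
        if (\<forall>w. w \<noteq> v \<longrightarrow> \<sigma> w = \<tau> w)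
        then tree_measure q M p b n \<tau> / (\<Sum>a<q. tree_measure q M p b n (\<sigma>(v := a)))
        else 0)"

definition dirichlet_form ::
  "nat \<Rightarrow> (nat \<Rightarrow> nat \<Rightarrow> real) \<Rightarrow> (nat \<Rightarrow> real) \<Rightarrow> nat \<Rightarrow> nat \<Rightarrow>
   ((nat list \<Rightarrow> nat) \<Rightarrow> real) \<Rightarrow> real" where
  "dirichlet_form q M p b n f =
     (1/2) * (\<Sum>\<sigma>\<in>configs q b n. \<Sum>\<tau>\<in>configs q b n.
        tree_measure q M p b n \<sigma> * glauber_rate q M p b n \<sigma> \<tau> * (f \<sigma> - f \<tau>)^2)"

definition tm_mean ::
  "nat \<Rightarrow> (nat \<Rightarrow> nat \<Rightarrow> real) \<Rightarrow> (nat \<Rightarrow> real) \<Rightarrow> nat \<Rightarrow> nat \<Rightarrow>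
   ((nat list \<Rightarrow> nat) \<Rightarrow> real) \<Rightarrow> real" where
  "tm_mean q M p b n f = (\<Sum>\<sigma>\<in>configs q b n. tree_measure q M p b n \<sigma> * f \<sigma>)"

definition tm_variance ::
  "nat \<Rightarrow> (nat \<Rightarrow> nat \<Rightarrow> real) \<Rightarrow> (nat \<Rightarrow> real) \<Rightarrow> nat \<Rightarrow> nat \<Rightarrow>
   ((nat list \<Rightarrow> nat) \<Rightarrow> real) \<Rightarrow> real" where
  "tm_variance q M p b n f =
     (\<Sum>\<sigma>\<in>configs q b n. tree_measure q M p b n \<sigma> * (f \<sigma> - tm_mean q M p b n f)^2)"

definition spectral_gap ::
  "nat \<Rightarrow> (nat \<Rightarrow> nat \<Rightarrow> real) \<Rightarrow> (nat \<Rightarrow> real) \<Rightarrow> nat \<Rightarrow> nat \<Rightarrow> real" where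
  "spectral_gap q M p b n =
     Inf {dirichlet_form q M p b n f / tm_variance q M p b n f | f. 0 < tm_variance q M p b n f}"

definition leaf_configs :: "nat \<Rightarrow> nat \<Rightarrow> nat \<Rightarrow> (nat list \<Rightarrow> nat) set" where
  "leaf_configs q b n = PiE (level b n) (\<lambda>_. {..<q})"

definition joint_law ::
  "nat \<Rightarrow> (nat \<Rightarrow> nat \<Rightarrow> real) \<Rightarrow> (nat \<Rightarrow> real) \<Rightarrow> nat \<Rightarrow> nat \<Rightarrow> nat \<Rightarrow> (nat list \<Rightarrow> nat) \<Rightarrow> real" where
  "joint_law q M p b n i x =
     (\<Sum>\<sigma>\<in>{\<sigma>\<in>configs q b n. \<sigma> [] = i \<and> restrict \<sigma> (level b n) = x}. tree_measure q M p b n \<sigma>)"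

definition root_law ::
  "nat \<Rightarrow> (nat \<Rightarrow> nat \<Rightarrow> real) \<Rightarrow> (nat \<Rightarrow> real) \<Rightarrow> nat \<Rightarrow> nat \<Rightarrow> nat \<Rightarrow> real" where
  "root_law q M p b n i = (\<Sum>x\<in>leaf_configs q b n. joint_law q M p b n i x)"

definition leaf_law ::
  "nat \<Rightarrow> (nat \<Rightarrow> nat \<Rightarrow> real) \<Rightarrow> (nat \<Rightarrow> real) \<Rightarrow> nat \<Rightarrow> nat \<Rightarrow> (nat list \<Rightarrow> nat) \<Rightarrow> real" where
  "leaf_law q M p b n x = (\<Sum>i<q. joint_law q M p b n i x)"

definition mutual_info ::
  "nat \<Rightarrow> (nat \<Rightarrow> nat \<Rightarrow> real) \<Rightarrow> (nat \<Rightarrow> real) \<Rightarrow> nat \<Rightarrow> nat \<Rightarrow> real" where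
  "mutual_info q M p b n =
     (\<Sum>i<q. \<Sum>x\<in>leaf_configs q b n.
        (let J = joint_law q M p b n i x in
         if J = 0 then 0
         else J * ln (J / (root_law q M p b n i * leaf_law q M p b n x))))"

definition cond_leaf_law ::
  "nat \<Rightarrow> (nat \<Rightarrow> nat \<Rightarrow> real) \<Rightarrow> (nat \<Rightarrow> real) \<Rightarrow> nat \<Rightarrow> nat \<Rightarrow> nat \<Rightarrow> (nat list \<Rightarrow> nat) \<Rightarrow> real" where
  "cond_leaf_law q M p b n l x = joint_law q M p b n l x / root_law q M p b n l"

definition tv_dist ::
  "nat \<Rightarrow> (nat \<Rightarrow> nat \<Rightarrow> real) \<Rightarrow> (nat \<Rightarrow> real) \<Rightarrow> nat \<Rightarrow> nat \<Rightarrow> nat \<Rightarrow> nat \<Rightarrow> real" where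
  "tv_dist q M p b n i j =
     (1/2) * (\<Sum>x\<in>leaf_configs q b n. \<bar>cond_leaf_law q M p b n i x - cond_leaf_law q M p b n j x\<bar>)"

definition reconstruction_solvable ::
  "nat \<Rightarrow> (nat \<Rightarrow> nat \<Rightarrow> real) \<Rightarrow> (nat \<Rightarrow> real) \<Rightarrow> nat \<Rightarrow> bool" where
  "reconstruction_solvable q M p b \<longleftrightarrow>
     (\<exists>i<q. \<exists>j<q. \<exists>L>0. (\<lambda>n. tv_dist q M p b n i j) \<longlonglongrightarrow> L)"

end

theory Submission
  imports Defs
begin

lemma sum_PiE_insert:
  assumes "x \<notin> S" "finite S" "finite (T x)"
  shows "(\<Sum>f\<in>PiE (insert x S) T. F f) = (\<Sum>y\<in>T x. \<Sum>g\<in>PiE S T. F (g(x := y)))"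
proof -
  have "(\<Sum>f\<in>PiE (insert x S) T. F f) = (\<Sum>z\<in>T x \<times> PiE S T. F ((\<lambda>(y, g). g(x := y)) z))"
    unfolding PiE_insert_eq by (subst sum.reindex) (auto simp: inj_combinator[OF assms(1)])
  also have "\<dots> = (\<Sum>y\<in>T x. \<Sum>g\<in>PiE S T. F (g(x := y)))"
    by (simp add: sum.cartesian_product case_prod_unfold)
  finally show ?thesis .
qed

locale tp =
  fixes q b n :: nat and M :: "nat \<Rightarrow> nat \<Rightarrow> real" and p :: "nat \<Rightarrow> real"
  assumes stoch: "stochastic q M"
    and pnn: "\<And>i. i < q \<Longrightarrow> 0 \<le> p i"
    and psum: "(\<Sum>i<q. p i) = 1"
begin

abbreviation "V \<equiv> tree_vertices b n"
abbreviation "C \<equiv> configs q b n"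
abbreviation "mu \<equiv> tree_measure q M p b n"

lemma Mnn: "i < q \<Longrightarrow> j < q \<Longrightarrow> 0 \<le> M i j"
  using stoch unfolding stochastic_def by auto

lemma Msum: "i < q \<Longrightarrow> (\<Sum>j<q. M i j) = 1"
  using stoch unfolding stochastic_def by auto

lemma q_pos: "0 < q"
  using psum by (cases q) auto

lemma finite_V: "finite V"
proof -
  have "V = {xs. set xs \<subseteq> {..<b} \<and> length xs \<le> n}" unfolding tree_vertices_def by auto
  then show ?thesis using finite_lists_length_le[of "{..<b}" n] by simp
qed

lemma nil_V: "[] \<in> V" unfolding tree_vertices_def by simp

lemma butlast_V: "v \<in> V \<Longrightarrow> butlast v \<in> V"
  unfolding tree_vertices_def by (auto dest: in_set_butlastD)

lemma finite_C: "finite C"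
  unfolding configs_def by (rule finite_PiE[OF finite_V]) simp

lemma C_val: "\<sigma> \<in> C \<Longrightarrow> v \<in> V \<Longrightarrow> \<sigma> v < q"
  unfolding configs_def by (auto simp: PiE_iff)

lemma C_upd: "\<sigma> \<in> C \<Longrightarrow> v \<in> V \<Longrightarrow> a < q \<Longrightarrow> \<sigma>(v := a) \<in> C"
  unfolding configs_def by (auto simp: PiE_iff extensional_def)

lemma C_ne: "(\<lambda>v\<in>V. 0) \<in> C"
  unfolding configs_def using q_pos by auto

definition prodW :: "nat list set \<Rightarrow> (nat list \<Rightarrow> nat) \<Rightarrow> real" where
  "prodW W \<sigma> = p (\<sigma> []) * (\<Prod>w\<in>W - {[]}. M (\<sigma> (butlast w)) (\<sigma> w))"

lemma marg_gen:
  assumes "finite W" "[] \<in> W" "\<forall>w\<in>W. butlast w \<in> W"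
  shows "(\<Sum>\<sigma>\<in>PiE W (\<lambda>_. {..<q}). prodW W \<sigma> * g (\<sigma> [])) = (\<Sum>i<q. p i * g i)"
  using assms
proof (induction "card W" arbitrary: W rule: less_induct)
  case less
  show ?case
  proof (cases "W = {[]}")
    case True
    have "(\<Sum>\<sigma>\<in>PiE (insert [] {}) (\<lambda>_. {..<q}). prodW {[]} \<sigma> * g (\<sigma> []))
        = (\<Sum>y<q. \<Sum>h\<in>PiE {} (\<lambda>_. {..<q}). prodW {[]} (h([] := y)) * g ((h([]:=y)) []))"
      by (rule sum_PiE_insert) auto
    also have "\<dots> = (\<Sum>i<q. p i * g i)" by (simp add: prodW_def)
    finally show ?thesis using True by simp
  next
    case False
    define L where "L = Max (length ` (W - {[]}))"
    have ne: "W - {[]} \<noteq> {}" using False less.prems(2) by auto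
    have "L \<in> length ` (W - {[]})" unfolding L_def using ne less.prems(1) by (intro Max_in) auto
    then obtain w where w: "w \<in> W" "w \<noteq> []" "length w = L" by auto
    have maxw: "\<And>u. u \<in> W \<Longrightarrow> u \<noteq> [] \<Longrightarrow> length u \<le> length w"
      using w(3) less.prems(1) unfolding L_def by (auto intro: Max_ge)
    define W' where "W' = W - {w}"
    have WW': "W = insert w W'" "w \<notin> W'" using w by (auto simp: W'_def)
    have fin': "finite W'" using less.prems(1) by (simp add: W'_def)
    have nil': "[] \<in> W'" using less.prems(2) w(2) by (simp add: W'_def)
    have bl: "butlast u \<noteq> w" if u: "u \<in> W" for u
    proof
      assume bu: "butlast u = w"
      then have "u \<noteq> []" using w(2) by auto
      then have "length u = length w + 1" using bu by (cases u rule: rev_cases) auto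
      with maxw[OF u \<open>u \<noteq> []\<close>] show False by simp
    qed
    have cl': "\<forall>u\<in>W'. butlast u \<in> W'"
      using less.prems(3) bl by (auto simp: W'_def)
    have card': "card W' < card W" unfolding W'_def using less.prems(1) w(1) by (rule card_Diff1_less)
    have IH: "(\<Sum>\<sigma>\<in>PiE W' (\<lambda>_. {..<q}). prodW W' \<sigma> * g (\<sigma> [])) = (\<Sum>i<q. p i * g i)"
      using less.hyps[OF card' fin' nil' cl'] .
    have bw: "butlast w \<in> W'" using less.prems(3) w(1) bl[OF w(1)] by (auto simp: W'_def)
    have upd: "prodW W (h(w := y)) = prodW W' h * M (h (butlast w)) y" if h: "h \<in> PiE W' (\<lambda>_. {..<q})" for h y
    proof -
      have e: "W - {[]} = insert w (W' - {[]})" "w \<notin> W' - {[]}" using WW' w by auto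
      have bwne: "butlast w \<noteq> w" using bl[OF w(1)] .
      have "prodW W (h(w:=y)) = p (h []) * (M (h (butlast w)) y * (\<Prod>u\<in>W' - {[]}. M ((h(w:=y)) (butlast u)) ((h(w:=y)) u)))"
        unfolding prodW_def e(1) using fin' w(2) e(2) bwne by (simp add: prod.insert)
      also have "(\<Prod>u\<in>W' - {[]}. M ((h(w:=y)) (butlast u)) ((h(w:=y)) u)) = (\<Prod>u\<in>W' - {[]}. M (h (butlast u)) (h u))"
      proof (rule prod.cong[OF refl])
        fix u assume u: "u \<in> W' - {[]}"
        then have "u \<noteq> w" "butlast u \<noteq> w" using WW'(2) bl[of u] unfolding W'_def by auto
        then show "M ((h(w:=y)) (butlast u)) ((h(w:=y)) u) = M (h (butlast u)) (h u)" by simp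
      qed
      finally show ?thesis unfolding prodW_def by (simp add: algebra_simps)
    qed
    have "(\<Sum>\<sigma>\<in>PiE W (\<lambda>_. {..<q}). prodW W \<sigma> * g (\<sigma> []))
       = (\<Sum>y<q. \<Sum>h\<in>PiE W' (\<lambda>_. {..<q}). prodW W (h(w:=y)) * g ((h(w:=y)) []))"
      unfolding WW'(1) by (rule sum_PiE_insert[OF WW'(2) fin']) simp
    also have "\<dots> = (\<Sum>y<q. \<Sum>h\<in>PiE W' (\<lambda>_. {..<q}). prodW W' h * g (h []) * M (h (butlast w)) y)"
      using w(2) by (intro sum.cong refl) (simp add: upd)
    also have "\<dots> = (\<Sum>h\<in>PiE W' (\<lambda>_. {..<q}). prodW W' h * g (h []) * (\<Sum>y<q. M (h (butlast w)) y))"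
      by (subst sum.swap) (simp add: sum_distrib_left)
    also have "\<dots> = (\<Sum>h\<in>PiE W' (\<lambda>_. {..<q}). prodW W' h * g (h []))"
      using bw by (intro sum.cong refl) (simp add: Msum PiE_iff)
    finally show ?thesis using IH by simp
  qed
qed

lemma mu_prodW: "\<sigma> \<in> C \<Longrightarrow> mu \<sigma> = prodW V \<sigma>"
  unfolding tree_measure_def prodW_def by simp

lemma mu_out: "\<sigma> \<notin> C \<Longrightarrow> mu \<sigma> = 0"
  unfolding tree_measure_def by simp

lemma marg: "(\<Sum>\<sigma>\<in>C. mu \<sigma> * g (\<sigma> [])) = (\<Sum>i<q. p i * g i)"
proof -
  have "(\<Sum>\<sigma>\<in>C. mu \<sigma> * g (\<sigma> [])) = (\<Sum>\<sigma>\<in>C. prodW V \<sigma> * g (\<sigma> []))"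
    by (intro sum.cong refl) (simp add: mu_prodW)
  also have "\<dots> = (\<Sum>i<q. p i * g i)"
    unfolding configs_def by (rule marg_gen[OF finite_V nil_V]) (auto intro: butlast_V)
  finally show ?thesis .
qed

lemma mu_total: "(\<Sum>\<sigma>\<in>C. mu \<sigma>) = 1"
  using marg[of "\<lambda>_. 1"] psum by simp

lemma mu_nn: "0 \<le> mu \<sigma>"
proof (cases "\<sigma> \<in> C")
  case True
  then show ?thesis unfolding tree_measure_def
  proof (simp, intro mult_nonneg_nonneg prod_nonneg ballI)
    show "0 \<le> p (\<sigma> [])" using pnn[OF C_val[OF True nil_V]] .
    fix w assume "w \<in> V - {[]}"
    then show "0 \<le> M (\<sigma> (butlast w)) (\<sigma> w)"
      using True by (intro Mnn C_val butlast_V) auto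
  qed
qed (simp add: mu_out)


definition agree :: "nat list \<Rightarrow> (nat list \<Rightarrow> nat) \<Rightarrow> (nat list \<Rightarrow> nat) \<Rightarrow> bool" where
  "agree v \<sigma> \<tau> \<longleftrightarrow> (\<forall>w. w \<noteq> v \<longrightarrow> \<sigma> w = \<tau> w)"

lemma fiber:
  assumes v: "v \<in> V" and s: "\<sigma> \<in> C"
  shows "(\<Sum>\<tau>\<in>C. if agree v \<sigma> \<tau> then G \<tau> else 0) = (\<Sum>a<q. G (\<sigma>(v := a)))"
proof -
  have "(\<Sum>\<tau>\<in>C. if agree v \<sigma> \<tau> then G \<tau> else 0) = (\<Sum>\<tau>\<in>{\<tau>\<in>C. agree v \<sigma> \<tau>}. G \<tau>)"
    using finite_C by (simp add: sum.inter_filter)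
  also have "{\<tau>\<in>C. agree v \<sigma> \<tau>} = (\<lambda>a. \<sigma>(v := a)) ` {..<q}"
  proof (intro equalityI subsetI)
    fix \<tau> assume "\<tau> \<in> {\<tau>\<in>C. agree v \<sigma> \<tau>}"
    then have t: "\<tau> \<in> C" "agree v \<sigma> \<tau>" by auto
    then have "\<tau> = \<sigma>(v := \<tau> v)" unfolding agree_def by (auto simp: fun_eq_iff)
    moreover have "\<tau> v < q" using C_val[OF t(1) v] .
    ultimately show "\<tau> \<in> (\<lambda>a. \<sigma>(v := a)) ` {..<q}" by blast
  next
    fix \<tau> assume "\<tau> \<in> (\<lambda>a. \<sigma>(v := a)) ` {..<q}"
    then obtain a where "a < q" "\<tau> = \<sigma>(v := a)" by auto
    then show "\<tau> \<in> {\<tau>\<in>C. agree v \<sigma> \<tau>}" using C_upd[OF s v] by (auto simp: agree_def)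
  qed
  also have "(\<Sum>\<tau>\<in>(\<lambda>a. \<sigma>(v := a)) ` {..<q}. G \<tau>) = (\<Sum>a<q. G (\<sigma>(v := a)))"
    by (rule sum.reindex_cong[where l="\<lambda>a. \<sigma>(v := a)"]) (auto simp: inj_on_def fun_eq_iff dest: spec[of _ v])
  finally show ?thesis .
qed

lemma swap_fiber:
  assumes v: "v \<in> V"
  shows "(\<Sum>\<sigma>\<in>C. \<Sum>a<q. T \<sigma> (\<sigma>(v := a))) = (\<Sum>\<sigma>\<in>C. \<Sum>a<q. T (\<sigma>(v := a)) \<sigma>)"
proof -
  have "(\<Sum>\<sigma>\<in>C. \<Sum>a<q. T \<sigma> (\<sigma>(v := a))) = (\<Sum>\<sigma>\<in>C. \<Sum>\<tau>\<in>C. if agree v \<sigma> \<tau> then T \<sigma> \<tau> else 0)"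
    by (intro sum.cong refl) (simp add: fiber[OF v])
  also have "\<dots> = (\<Sum>\<tau>\<in>C. \<Sum>\<sigma>\<in>C. if agree v \<sigma> \<tau> then T \<sigma> \<tau> else 0)"
    by (rule sum.swap)
  also have "\<dots> = (\<Sum>\<tau>\<in>C. \<Sum>\<sigma>\<in>C. if agree v \<tau> \<sigma> then T \<sigma> \<tau> else 0)"
    by (intro sum.cong refl) (auto simp: agree_def)
  also have "\<dots> = (\<Sum>\<tau>\<in>C. \<Sum>a<q. T (\<tau>(v := a)) \<tau>)"
    by (intro sum.cong refl) (simp add: fiber[OF v])
  finally show ?thesis .
qed

definition adj :: "nat list \<Rightarrow> nat list \<Rightarrow> bool" where
  "adj u v \<longleftrightarrow> (v \<noteq> [] \<and> u = butlast v) \<or> (u \<noteq> [] \<and> butlast u = v)"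

lemma butlast_neq: "v \<noteq> [] \<Longrightarrow> butlast v \<noteq> v"
  by (metis append_butlast_last_id append_self_conv not_Cons_self2)

lemma not_adj_self: "\<not> adj v v"
  unfolding adj_def using butlast_neq by metis

definition Aset :: "nat list \<Rightarrow> nat list set" where
  "Aset v = {w \<in> V - {[]}. w = v \<or> butlast w = v}"

definition Floc :: "nat list \<Rightarrow> (nat list \<Rightarrow> nat) \<Rightarrow> nat \<Rightarrow> real" where
  "Floc v \<sigma> a = (if v = [] then p a else 1) * (\<Prod>w\<in>Aset v. M ((\<sigma>(v:=a)) (butlast w)) ((\<sigma>(v:=a)) w))"

definition Rrest :: "nat list \<Rightarrow> (nat list \<Rightarrow> nat) \<Rightarrow> real" where
  "Rrest v \<sigma> = (if v = [] then 1 else p (\<sigma> [])) * (\<Prod>w\<in>(V - {[]}) - Aset v. M (\<sigma> (butlast w)) (\<sigma> w))"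

lemma factor:
  assumes s: "\<sigma> \<in> C" and v: "v \<in> V" and a: "a < q"
  shows "mu (\<sigma>(v := a)) = Floc v \<sigma> a * Rrest v \<sigma>"
proof -
  have fin: "finite (V - {[]})" using finite_V by simp
  have sub: "Aset v \<subseteq> V - {[]}" unfolding Aset_def by auto
  have "mu (\<sigma>(v := a)) = p ((\<sigma>(v:=a)) []) * (\<Prod>w\<in>V - {[]}. M ((\<sigma>(v:=a)) (butlast w)) ((\<sigma>(v:=a)) w))"
    using C_upd[OF s v a] unfolding tree_measure_def by simp
  also have "(\<Prod>w\<in>V - {[]}. M ((\<sigma>(v:=a)) (butlast w)) ((\<sigma>(v:=a)) w))
      = (\<Prod>w\<in>(V - {[]}) - Aset v. M ((\<sigma>(v:=a)) (butlast w)) ((\<sigma>(v:=a)) w)) * (\<Prod>w\<in>Aset v. M ((\<sigma>(v:=a)) (butlast w)) ((\<sigma>(v:=a)) w))"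
    by (rule prod.subset_diff[OF sub fin])
  also have "(\<Prod>w\<in>(V - {[]}) - Aset v. M ((\<sigma>(v:=a)) (butlast w)) ((\<sigma>(v:=a)) w)) = (\<Prod>w\<in>(V - {[]}) - Aset v. M (\<sigma> (butlast w)) (\<sigma> w))"
    by (intro prod.cong refl) (auto simp: Aset_def)
  finally have e1: "mu (\<sigma>(v := a)) = p ((\<sigma>(v:=a)) []) * ((\<Prod>w\<in>(V - {[]}) - Aset v. M (\<sigma> (butlast w)) (\<sigma> w)) * (\<Prod>w\<in>Aset v. M ((\<sigma>(v:=a)) (butlast w)) ((\<sigma>(v:=a)) w)))" .
  have e2: "p ((\<sigma>(v:=a)) []) = (if v = [] then p a else 1) * (if v = [] then 1 else p (\<sigma> []))" by auto
  show ?thesis unfolding Floc_def Rrest_def e1 e2 by (simp only: ac_simps)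
qed

lemma Floc_loc:
  assumes "\<And>u. adj u v \<Longrightarrow> \<sigma>' u = \<sigma> u"
  shows "Floc v \<sigma>' a = Floc v \<sigma> a"
proof -
  have "M ((\<sigma>'(v:=a)) (butlast w)) ((\<sigma>'(v:=a)) w) = M ((\<sigma>(v:=a)) (butlast w)) ((\<sigma>(v:=a)) w)"
    if w: "w \<in> Aset v" for w
  proof -
    have wne: "w \<noteq> []" using w by (auto simp: Aset_def)
    show ?thesis
    proof (cases "w = v")
      case True
      then have "adj (butlast v) v" "butlast v \<noteq> v" using wne butlast_neq by (auto simp: adj_def)
      then show ?thesis using True assms by simp
    next
      case False
      then have bw: "butlast w = v" using w by (auto simp: Aset_def)
      then have "adj w v" using wne by (auto simp: adj_def)
      then show ?thesis using False assms bw by simp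
    qed
  qed
  then show ?thesis unfolding Floc_def by (simp cong: prod.cong)
qed

lemma Rrest_upd: "Rrest v (\<sigma>(v := c)) = Rrest v \<sigma>"
proof -
  have "(\<Prod>w\<in>(V - {[]}) - Aset v. M ((\<sigma>(v:=c)) (butlast w)) ((\<sigma>(v:=c)) w)) = (\<Prod>w\<in>(V - {[]}) - Aset v. M (\<sigma> (butlast w)) (\<sigma> w))"
    by (intro prod.cong refl) (auto simp: Aset_def)
  then show ?thesis unfolding Rrest_def by auto
qed

lemma Floc_nn:
  assumes s: "\<sigma> \<in> C" and v: "v \<in> V" and a: "a < q"
  shows "0 \<le> Floc v \<sigma> a"
proof -
  have s': "\<sigma>(v:=a) \<in> C" using C_upd[OF s v a] .
  have "0 \<le> (\<Prod>w\<in>Aset v. M ((\<sigma>(v:=a)) (butlast w)) ((\<sigma>(v:=a)) w))"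
  proof (intro prod_nonneg ballI)
    fix w assume "w \<in> Aset v"
    then have "w \<in> V" by (auto simp: Aset_def)
    then show "0 \<le> M ((\<sigma>(v:=a)) (butlast w)) ((\<sigma>(v:=a)) w)"
      by (intro Mnn C_val[OF s'] butlast_V)
  qed
  then show ?thesis unfolding Floc_def using pnn[OF a] by auto
qed

definition ZF :: "nat list \<Rightarrow> (nat list \<Rightarrow> nat) \<Rightarrow> real" where
  "ZF v \<sigma> = (\<Sum>a<q. Floc v \<sigma> a)"

definition pk :: "nat list \<Rightarrow> (nat list \<Rightarrow> nat) \<Rightarrow> nat \<Rightarrow> real" where
  "pk v \<sigma> a = (if ZF v \<sigma> = 0 then (if a = 0 then 1 else 0) else Floc v \<sigma> a / ZF v \<sigma>)"

definition Pi :: "nat list \<Rightarrow> ((nat list \<Rightarrow> nat) \<Rightarrow> real) \<Rightarrow> (nat list \<Rightarrow> nat) \<Rightarrow> real" where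
  "Pi v g \<sigma> = (\<Sum>a<q. pk v \<sigma> a * g (\<sigma>(v := a)))"

definition Zmu :: "nat list \<Rightarrow> (nat list \<Rightarrow> nat) \<Rightarrow> real" where
  "Zmu v \<sigma> = (\<Sum>a<q. mu (\<sigma>(v := a)))"

lemma ZF_nn: "\<sigma> \<in> C \<Longrightarrow> v \<in> V \<Longrightarrow> 0 \<le> ZF v \<sigma>"
  unfolding ZF_def by (intro sum_nonneg) (simp add: Floc_nn)

lemma pk_nn: "\<sigma> \<in> C \<Longrightarrow> v \<in> V \<Longrightarrow> a < q \<Longrightarrow> 0 \<le> pk v \<sigma> a"
  unfolding pk_def using Floc_nn ZF_nn by auto

lemma pk_sum: "\<sigma> \<in> C \<Longrightarrow> v \<in> V \<Longrightarrow> (\<Sum>a<q. pk v \<sigma> a) = 1"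
proof (cases "ZF v \<sigma> = 0")
  case True
  then show ?thesis unfolding pk_def using q_pos by (simp add: sum.delta)
next
  case False
  then show ?thesis unfolding pk_def by (simp add: sum_divide_distrib[symmetric] ZF_def)
qed

lemma pk_loc:
  assumes "\<And>u. adj u v \<Longrightarrow> \<sigma>' u = \<sigma> u"
  shows "pk v \<sigma>' a = pk v \<sigma> a"
proof -
  have "\<And>a. Floc v \<sigma>' a = Floc v \<sigma> a" using Floc_loc[OF assms] .
  then show ?thesis unfolding pk_def ZF_def by simp
qed

lemma pk_upd: "pk v (\<sigma>(v := c)) a = pk v \<sigma> a"
  by (rule pk_loc) (auto simp: not_adj_self)

lemma mu_pk:
  assumes s: "\<sigma> \<in> C" and v: "v \<in> V" and a: "a < q"
  shows "mu (\<sigma>(v := a)) = pk v \<sigma> a * Zmu v \<sigma>"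
proof -
  have Z: "Zmu v \<sigma> = ZF v \<sigma> * Rrest v \<sigma>"
    unfolding Zmu_def ZF_def by (simp add: factor[OF s v] sum_distrib_right)
  show ?thesis
  proof (cases "ZF v \<sigma> = 0")
    case True
    then have "Floc v \<sigma> a = 0"
      using sum_nonneg_eq_0_iff[of "{..<q}" "Floc v \<sigma>"] Floc_nn[OF s v] a unfolding ZF_def by auto
    then show ?thesis using Z True by (simp add: factor[OF s v a])
  next
    case False
    then show ?thesis using Z by (simp add: factor[OF s v a] pk_def)
  qed
qed

lemma mu_self: "\<sigma> \<in> C \<Longrightarrow> v \<in> V \<Longrightarrow> mu \<sigma> = pk v \<sigma> (\<sigma> v) * Zmu v \<sigma>"
  using mu_pk[of \<sigma> v "\<sigma> v"] C_val by simp

lemma stat: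
  assumes v: "v \<in> V"
  shows "(\<Sum>\<sigma>\<in>C. mu \<sigma> * Pi v g \<sigma>) = (\<Sum>\<sigma>\<in>C. mu \<sigma> * g \<sigma>)"
proof -
  have "(\<Sum>\<sigma>\<in>C. mu \<sigma> * Pi v g \<sigma>) = (\<Sum>\<sigma>\<in>C. \<Sum>a<q. (\<lambda>\<sigma> \<tau>. mu \<sigma> * pk v \<sigma> (\<tau> v) * g \<tau>) \<sigma> (\<sigma>(v := a)))"
    unfolding Pi_def by (simp add: sum_distrib_left mult.assoc)
  also have "\<dots> = (\<Sum>\<sigma>\<in>C. \<Sum>a<q. (\<lambda>\<sigma> \<tau>. mu \<sigma> * pk v \<sigma> (\<tau> v) * g \<tau>) (\<sigma>(v := a)) \<sigma>)"
    by (rule swap_fiber[OF v])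
  also have "\<dots> = (\<Sum>\<sigma>\<in>C. \<Sum>a<q. mu (\<sigma>(v := a)) * pk v \<sigma> (\<sigma> v) * g \<sigma>)"
    by (simp add: pk_upd)
  also have "\<dots> = (\<Sum>\<sigma>\<in>C. Zmu v \<sigma> * pk v \<sigma> (\<sigma> v) * g \<sigma>)"
    unfolding Zmu_def by (simp add: sum_distrib_right)
  also have "\<dots> = (\<Sum>\<sigma>\<in>C. mu \<sigma> * g \<sigma>)"
    using v by (intro sum.cong refl) (simp add: mu_self)
  finally show ?thesis .
qed

lemma Pi_pull:
  assumes "\<And>a. h (\<sigma>(v := a)) = h \<sigma>"
  shows "Pi v (\<lambda>\<tau>. h \<tau> * g \<tau>) \<sigma> = h \<sigma> * Pi v g \<sigma>"
  unfolding Pi_def using assms by (simp add: sum_distrib_left algebra_simps)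

lemma Pi_indep: "Pi v g (\<sigma>(v := c)) = Pi v g \<sigma>"
  unfolding Pi_def by (simp add: pk_upd)

lemma Pi_proj:
  assumes v: "v \<in> V"
  shows "(\<Sum>\<sigma>\<in>C. mu \<sigma> * (Pi v f \<sigma>)\<^sup>2) = (\<Sum>\<sigma>\<in>C. mu \<sigma> * (Pi v f \<sigma> * f \<sigma>))"
proof -
  have "(\<Sum>\<sigma>\<in>C. mu \<sigma> * (Pi v f \<sigma>)\<^sup>2) = (\<Sum>\<sigma>\<in>C. mu \<sigma> * Pi v (\<lambda>\<tau>. Pi v f \<tau> * f \<tau>) \<sigma>)"
    by (intro sum.cong refl) (simp add: Pi_pull Pi_indep power2_eq_square)
  also have "\<dots> = (\<Sum>\<sigma>\<in>C. mu \<sigma> * (Pi v f \<sigma> * f \<sigma>))"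
    by (rule stat[OF v])
  finally show ?thesis .
qed


lemma rate_term:
  assumes s: "\<sigma> \<in> C" and t: "\<tau> \<in> C"
  shows "mu \<sigma> * glauber_rate q M p b n \<sigma> \<tau> * (f \<sigma> - f \<tau>)\<^sup>2
       = (\<Sum>v\<in>V. if agree v \<sigma> \<tau> then mu \<sigma> * pk v \<sigma> (\<tau> v) * (f \<sigma> - f \<tau>)\<^sup>2 else 0)"
proof -
  have g: "glauber_rate q M p b n \<sigma> \<tau> = (\<Sum>v\<in>V. if agree v \<sigma> \<tau> then mu \<tau> / Zmu v \<sigma> else 0)"
    unfolding glauber_rate_def agree_def Zmu_def by simp
  have key: "mu \<sigma> * (mu \<tau> / Zmu v \<sigma>) = mu \<sigma> * pk v \<sigma> (\<tau> v)" if v: "v \<in> V" and ag: "agree v \<sigma> \<tau>" for v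
  proof -
    have te: "\<tau> = \<sigma>(v := \<tau> v)" using ag unfolding agree_def by (auto simp: fun_eq_iff)
    have tv: "\<tau> v < q" using C_val[OF t v] .
    show ?thesis
    proof (cases "Zmu v \<sigma> = 0")
      case True
      then show ?thesis using mu_self[OF s v] by simp
    next
      case False
      have "mu \<tau> = pk v \<sigma> (\<tau> v) * Zmu v \<sigma>" using mu_pk[OF s v tv] te by simp
      then show ?thesis using False by simp
    qed
  qed
  have "mu \<sigma> * glauber_rate q M p b n \<sigma> \<tau> * (f \<sigma> - f \<tau>)\<^sup>2
      = (\<Sum>v\<in>V. if agree v \<sigma> \<tau> then mu \<sigma> * (mu \<tau> / Zmu v \<sigma>) * (f \<sigma> - f \<tau>)\<^sup>2 else 0)"
    unfolding g sum_distrib_left sum_distrib_right by (intro sum.cong refl) auto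
  also have "\<dots> = (\<Sum>v\<in>V. if agree v \<sigma> \<tau> then mu \<sigma> * pk v \<sigma> (\<tau> v) * (f \<sigma> - f \<tau>)\<^sup>2 else 0)"
  proof (intro sum.cong refl)
    fix v assume v: "v \<in> V"
    show "(if agree v \<sigma> \<tau> then mu \<sigma> * (mu \<tau> / Zmu v \<sigma>) * (f \<sigma> - f \<tau>)\<^sup>2 else 0) =
          (if agree v \<sigma> \<tau> then mu \<sigma> * pk v \<sigma> (\<tau> v) * (f \<sigma> - f \<tau>)\<^sup>2 else 0)"
    proof (cases "agree v \<sigma> \<tau>")
      case True
      show ?thesis by (simp only: if_P[OF True] key[OF v True])
    qed simp
  qed
  finally show ?thesis .
qed

lemma expand_sq:
  assumes s: "\<sigma> \<in> C" and v: "v \<in> V"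
  shows "(\<Sum>a<q. mu \<sigma> * pk v \<sigma> a * (f \<sigma> - f (\<sigma>(v := a)))\<^sup>2)
       = mu \<sigma> * (f \<sigma>)\<^sup>2 - 2 * (mu \<sigma> * (f \<sigma> * Pi v f \<sigma>)) + mu \<sigma> * Pi v (\<lambda>\<tau>. (f \<tau>)\<^sup>2) \<sigma>"
proof -
  have "(\<Sum>a<q. mu \<sigma> * pk v \<sigma> a * (f \<sigma> - f (\<sigma>(v := a)))\<^sup>2)
      = (\<Sum>a<q. mu \<sigma> * (f \<sigma>)\<^sup>2 * pk v \<sigma> a - 2 * (mu \<sigma> * f \<sigma>) * (pk v \<sigma> a * f (\<sigma>(v := a))) + mu \<sigma> * (pk v \<sigma> a * (f (\<sigma>(v := a)))\<^sup>2))"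
    by (intro sum.cong refl) (simp add: power2_eq_square algebra_simps)
  also have "\<dots> = mu \<sigma> * (f \<sigma>)\<^sup>2 * (\<Sum>a<q. pk v \<sigma> a) - 2 * (mu \<sigma> * f \<sigma>) * (\<Sum>a<q. pk v \<sigma> a * f (\<sigma>(v := a))) + mu \<sigma> * (\<Sum>a<q. pk v \<sigma> a * (f (\<sigma>(v := a)))\<^sup>2)"
    by (simp add: sum.distrib sum_subtractf sum_distrib_left)
  also have "\<dots> = mu \<sigma> * (f \<sigma>)\<^sup>2 - 2 * (mu \<sigma> * (f \<sigma> * Pi v f \<sigma>)) + mu \<sigma> * Pi v (\<lambda>\<tau>. (f \<tau>)\<^sup>2) \<sigma>"
    unfolding Pi_def using pk_sum[OF s v] by (simp add: algebra_simps)
  finally show ?thesis .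
qed

lemma dir_eq:
  "dirichlet_form q M p b n f = (\<Sum>v\<in>V. (\<Sum>\<sigma>\<in>C. mu \<sigma> * (f \<sigma>)\<^sup>2) - (\<Sum>\<sigma>\<in>C. mu \<sigma> * (f \<sigma> * Pi v f \<sigma>)))"
proof -
  have "dirichlet_form q M p b n f = 1/2 * (\<Sum>\<sigma>\<in>C. \<Sum>\<tau>\<in>C. \<Sum>v\<in>V. if agree v \<sigma> \<tau> then mu \<sigma> * pk v \<sigma> (\<tau> v) * (f \<sigma> - f \<tau>)\<^sup>2 else 0)"
    unfolding dirichlet_form_def by (simp add: rate_term cong: sum.cong)
  also have "(\<Sum>\<sigma>\<in>C. \<Sum>\<tau>\<in>C. \<Sum>v\<in>V. if agree v \<sigma> \<tau> then mu \<sigma> * pk v \<sigma> (\<tau> v) * (f \<sigma> - f \<tau>)\<^sup>2 else 0)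
      = (\<Sum>v\<in>V. \<Sum>\<sigma>\<in>C. \<Sum>\<tau>\<in>C. if agree v \<sigma> \<tau> then mu \<sigma> * pk v \<sigma> (\<tau> v) * (f \<sigma> - f \<tau>)\<^sup>2 else 0)"
    by (subst sum.swap) (simp add: sum.swap[of _ C V])
  also have "\<dots> = (\<Sum>v\<in>V. \<Sum>\<sigma>\<in>C. \<Sum>a<q. mu \<sigma> * pk v \<sigma> a * (f \<sigma> - f (\<sigma>(v := a)))\<^sup>2)"
    by (intro sum.cong refl) (simp add: fiber)
  also have "\<dots> = (\<Sum>v\<in>V. \<Sum>\<sigma>\<in>C. mu \<sigma> * (f \<sigma>)\<^sup>2 - 2 * (mu \<sigma> * (f \<sigma> * Pi v f \<sigma>)) + mu \<sigma> * Pi v (\<lambda>\<tau>. (f \<tau>)\<^sup>2) \<sigma>)"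
    by (intro sum.cong refl) (simp add: expand_sq)
  also have "\<dots> = (\<Sum>v\<in>V. 2 * ((\<Sum>\<sigma>\<in>C. mu \<sigma> * (f \<sigma>)\<^sup>2) - (\<Sum>\<sigma>\<in>C. mu \<sigma> * (f \<sigma> * Pi v f \<sigma>))))"
  proof (intro sum.cong refl)
    fix v assume v: "v \<in> V"
    show "(\<Sum>\<sigma>\<in>C. mu \<sigma> * (f \<sigma>)\<^sup>2 - 2 * (mu \<sigma> * (f \<sigma> * Pi v f \<sigma>)) + mu \<sigma> * Pi v (\<lambda>\<tau>. (f \<tau>)\<^sup>2) \<sigma>)
        = 2 * ((\<Sum>\<sigma>\<in>C. mu \<sigma> * (f \<sigma>)\<^sup>2) - (\<Sum>\<sigma>\<in>C. mu \<sigma> * (f \<sigma> * Pi v f \<sigma>)))"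
    proof -
      have "(\<Sum>\<sigma>\<in>C. mu \<sigma> * (f \<sigma>)\<^sup>2 - 2 * (mu \<sigma> * (f \<sigma> * Pi v f \<sigma>)) + mu \<sigma> * Pi v (\<lambda>\<tau>. (f \<tau>)\<^sup>2) \<sigma>)
         = (\<Sum>\<sigma>\<in>C. mu \<sigma> * (f \<sigma>)\<^sup>2) - 2 * (\<Sum>\<sigma>\<in>C. mu \<sigma> * (f \<sigma> * Pi v f \<sigma>)) + (\<Sum>\<sigma>\<in>C. mu \<sigma> * Pi v (\<lambda>\<tau>. (f \<tau>)\<^sup>2) \<sigma>)"
        by (simp add: sum.distrib sum_subtractf sum_distrib_left)
      then show ?thesis using stat[OF v, of "\<lambda>\<tau>. (f \<tau>)\<^sup>2"] by simp
    qed
  qed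
  also have "(\<Sum>v\<in>V. 2 * ((\<Sum>\<sigma>\<in>C. mu \<sigma> * (f \<sigma>)\<^sup>2) - (\<Sum>\<sigma>\<in>C. mu \<sigma> * (f \<sigma> * Pi v f \<sigma>))))
     = 2 * (\<Sum>v\<in>V. (\<Sum>\<sigma>\<in>C. mu \<sigma> * (f \<sigma>)\<^sup>2) - (\<Sum>\<sigma>\<in>C. mu \<sigma> * (f \<sigma> * Pi v f \<sigma>)))"
    by (rule sum_distrib_left[symmetric])
  finally show ?thesis by simp
qed

lemma dir_nn: "0 \<le> dirichlet_form q M p b n f"
  unfolding dirichlet_form_def glauber_rate_def
  by (intro mult_nonneg_nonneg sum_nonneg) (auto intro!: divide_nonneg_nonneg sum_nonneg mu_nn)

abbreviation "N \<equiv> card V"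

lemma N_pos: "0 < N"
  using finite_V nil_V card_gt_0_iff by blast

definition Kop :: "((nat list \<Rightarrow> nat) \<Rightarrow> real) \<Rightarrow> (nat list \<Rightarrow> nat) \<Rightarrow> real" where
  "Kop g \<sigma> = (\<Sum>v\<in>V. Pi v g \<sigma>) / real N"

lemma sq_avg:
  fixes x :: "nat list \<Rightarrow> real"
  shows "((\<Sum>v\<in>V. x v) / real N)\<^sup>2 \<le> (\<Sum>v\<in>V. (x v)\<^sup>2) / real N"
proof -
  define m where "m = (\<Sum>v\<in>V. x v) / real N"
  have Np: "real N > 0" using N_pos by simp
  have "0 \<le> (\<Sum>v\<in>V. (x v - m)\<^sup>2)" by (intro sum_nonneg) simp
  also have "(\<Sum>v\<in>V. (x v - m)\<^sup>2) = (\<Sum>v\<in>V. (x v)\<^sup>2) - 2 * m * (\<Sum>v\<in>V. x v) + real N * m\<^sup>2"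
    by (simp add: power2_eq_square algebra_simps sum.distrib sum_subtractf sum_distrib_left)
  also have "(\<Sum>v\<in>V. x v) = real N * m" unfolding m_def using Np by simp
  finally have "real N * m\<^sup>2 \<le> (\<Sum>v\<in>V. (x v)\<^sup>2)" by (simp add: power2_eq_square algebra_simps)
  then show ?thesis using Np unfolding m_def[symmetric] by (simp add: field_simps)
qed

lemma K_contr:
  "(\<Sum>\<sigma>\<in>C. mu \<sigma> * (Kop f \<sigma>)\<^sup>2) \<le> (\<Sum>\<sigma>\<in>C. mu \<sigma> * (f \<sigma>)\<^sup>2) - dirichlet_form q M p b n f / real N"
proof -
  have Np: "real N > 0" using N_pos by simp
  have "(\<Sum>\<sigma>\<in>C. mu \<sigma> * (Kop f \<sigma>)\<^sup>2) \<le> (\<Sum>\<sigma>\<in>C. mu \<sigma> * ((\<Sum>v\<in>V. (Pi v f \<sigma>)\<^sup>2) / real N))"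
    unfolding Kop_def by (intro sum_mono mult_left_mono sq_avg mu_nn)
  also have "\<dots> = (\<Sum>v\<in>V. \<Sum>\<sigma>\<in>C. mu \<sigma> * (Pi v f \<sigma>)\<^sup>2) / real N"
    by (simp add: sum_divide_distrib[symmetric] sum_distrib_left sum.swap[of _ C V])
  also have "\<dots> = (\<Sum>v\<in>V. \<Sum>\<sigma>\<in>C. mu \<sigma> * (f \<sigma> * Pi v f \<sigma>)) / real N"
    by (simp add: Pi_proj mult.commute cong: sum.cong)
  also have "\<dots> = (\<Sum>\<sigma>\<in>C. mu \<sigma> * (f \<sigma>)\<^sup>2) - dirichlet_form q M p b n f / real N"
    unfolding dir_eq using Np by (simp add: sum_subtractf field_simps)
  finally show ?thesis .
qed

lemma K_mean: "(\<Sum>\<sigma>\<in>C. mu \<sigma> * Kop f \<sigma>) = (\<Sum>\<sigma>\<in>C. mu \<sigma> * f \<sigma>)"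
proof -
  have Np: "real N > 0" using N_pos by simp
  have "(\<Sum>\<sigma>\<in>C. mu \<sigma> * Kop f \<sigma>) = (\<Sum>v\<in>V. \<Sum>\<sigma>\<in>C. mu \<sigma> * Pi v f \<sigma>) / real N"
    unfolding Kop_def by (simp add: sum_divide_distrib[symmetric] sum_distrib_left sum.swap[of _ C V])
  also have "\<dots> = (\<Sum>\<sigma>\<in>C. mu \<sigma> * f \<sigma>)"
    using Np by (simp add: stat)
  finally show ?thesis .
qed

lemma K_const: "\<sigma> \<in> C \<Longrightarrow> Kop (\<lambda>\<tau>. f \<tau> + c) \<sigma> = Kop f \<sigma> + c"
proof -
  assume s: "\<sigma> \<in> C"
  have Np: "real N > 0" using N_pos by simp
  have "\<And>v. v \<in> V \<Longrightarrow> Pi v (\<lambda>\<tau>. f \<tau> + c) \<sigma> = Pi v f \<sigma> + c"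
  proof -
    fix v assume v: "v \<in> V"
    have "Pi v (\<lambda>\<tau>. f \<tau> + c) \<sigma> = Pi v f \<sigma> + (\<Sum>a<q. pk v \<sigma> a) * c"
      unfolding Pi_def by (simp add: distrib_left sum.distrib sum_distrib_right)
    then show "Pi v (\<lambda>\<tau>. f \<tau> + c) \<sigma> = Pi v f \<sigma> + c" using pk_sum[OF s v] by simp
  qed
  then show ?thesis unfolding Kop_def using Np by (simp add: sum.distrib field_simps)
qed

lemma K_iter:
  assumes lam: "\<And>f. lam * tm_variance q M p b n f \<le> dirichlet_form q M p b n f"
    and mz: "(\<Sum>\<sigma>\<in>C. mu \<sigma> * f \<sigma>) = 0"
  shows "(\<Sum>\<sigma>\<in>C. mu \<sigma> * ((Kop ^^ m) f \<sigma>)\<^sup>2) \<le> exp (- lam * m / N) * (\<Sum>\<sigma>\<in>C. mu \<sigma> * (f \<sigma>)\<^sup>2)"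
proof (induction m)
  case 0
  then show ?case by simp
next
  case (Suc m)
  define g where "g = (Kop ^^ m) f"
  have mz': "(\<Sum>\<sigma>\<in>C. mu \<sigma> * g \<sigma>) = 0"
    unfolding g_def by (induction m) (simp_all add: K_mean mz)
  have var: "tm_variance q M p b n g = (\<Sum>\<sigma>\<in>C. mu \<sigma> * (g \<sigma>)\<^sup>2)"
    unfolding tm_variance_def tm_mean_def mz' by simp
  have Np: "real N > 0" using N_pos by simp
  have S0: "0 \<le> (\<Sum>\<sigma>\<in>C. mu \<sigma> * (g \<sigma>)\<^sup>2)" by (intro sum_nonneg mult_nonneg_nonneg mu_nn) simp
  have "(\<Sum>\<sigma>\<in>C. mu \<sigma> * ((Kop ^^ Suc m) f \<sigma>)\<^sup>2) = (\<Sum>\<sigma>\<in>C. mu \<sigma> * (Kop g \<sigma>)\<^sup>2)"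
    by (simp add: g_def)
  also have "\<dots> \<le> (\<Sum>\<sigma>\<in>C. mu \<sigma> * (g \<sigma>)\<^sup>2) - dirichlet_form q M p b n g / real N"
    by (rule K_contr)
  also have "\<dots> \<le> (1 - lam / N) * (\<Sum>\<sigma>\<in>C. mu \<sigma> * (g \<sigma>)\<^sup>2)"
    using lam[of g] Np unfolding var by (simp add: field_simps)
  also have "\<dots> \<le> exp (- lam / N) * (\<Sum>\<sigma>\<in>C. mu \<sigma> * (g \<sigma>)\<^sup>2)"
    using exp_ge_add_one_self[of "- lam / N"] S0 by (intro mult_right_mono) auto
  also have "\<dots> \<le> exp (- lam / N) * (exp (- lam * m / N) * (\<Sum>\<sigma>\<in>C. mu \<sigma> * (f \<sigma>)\<^sup>2))"
    using Suc.IH unfolding g_def by (intro mult_left_mono) auto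
  also have "\<dots> = exp (- lam * Suc m / N) * (\<Sum>\<sigma>\<in>C. mu \<sigma> * (f \<sigma>)\<^sup>2)"
  proof -
    have "exp (- lam / N) * exp (- lam * m / N) = exp (- lam * Suc m / N)"
      using Np by (subst exp_add[symmetric]) (simp add: field_simps)
    then show ?thesis by (simp add: mult.assoc[symmetric])
  qed
  finally show ?case .
qed

end

context tp begin

definition infl :: "nat list \<Rightarrow> ((nat list \<Rightarrow> nat) \<Rightarrow> real) \<Rightarrow> real" where
  "infl u g = Max ((\<lambda>(\<sigma>, a). \<bar>g \<sigma> - g (\<sigma>(u := a))\<bar>) ` (C \<times> {..<q}))"

lemma infl_fin: "finite ((\<lambda>(\<sigma>, a). \<bar>g \<sigma> - g (\<sigma>(u := a))\<bar>) ` (C \<times> {..<q}))"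
  using finite_C by simp

lemma infl_ne: "(\<lambda>(\<sigma>, a). \<bar>g \<sigma> - g (\<sigma>(u := a))\<bar>) ` (C \<times> {..<q}) \<noteq> {}"
  using C_ne q_pos by blast

lemma infl_ge: "\<sigma> \<in> C \<Longrightarrow> a < q \<Longrightarrow> \<bar>g \<sigma> - g (\<sigma>(u := a))\<bar> \<le> infl u g"
  unfolding infl_def by (rule Max_ge[OF infl_fin]) auto

lemma infl_le:
  assumes "\<And>\<sigma> a. \<sigma> \<in> C \<Longrightarrow> a < q \<Longrightarrow> \<bar>g \<sigma> - g (\<sigma>(u := a))\<bar> \<le> B"
  shows "infl u g \<le> B"
  unfolding infl_def using assms by (subst Max_le_iff[OF infl_fin infl_ne]) auto

lemma infl_nn: "0 \<le> infl u g"
  using infl_ge[OF C_ne q_pos, of g u] by linarith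

lemma pk_sum_c:
  assumes "\<sigma> \<in> C" "v \<in> V"
  shows "(\<Sum>a<q. pk v \<sigma> a * c) = c" "(\<Sum>a<q. c * pk v \<sigma> a) = c"
  using pk_sum[OF assms] by (simp_all add: sum_distrib_right[symmetric] sum_distrib_left[symmetric])

lemma conv_bound:
  assumes s: "\<sigma> \<in> C" and v: "v \<in> V" and x: "\<And>a. a < q \<Longrightarrow> \<bar>x a\<bar> \<le> B"
  shows "\<bar>\<Sum>a<q. pk v \<sigma> a * x a\<bar> \<le> B"
proof -
  have "\<bar>\<Sum>a<q. pk v \<sigma> a * x a\<bar> \<le> (\<Sum>a<q. \<bar>pk v \<sigma> a * x a\<bar>)" by (rule sum_abs)
  also have "\<dots> \<le> (\<Sum>a<q. pk v \<sigma> a * B)"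
    using pk_nn[OF s v] x by (intro sum_mono) (simp add: abs_mult mult_left_mono)
  also have "\<dots> = B" using pk_sum[OF s v] by (simp add: sum_distrib_right[symmetric])
  finally show ?thesis .
qed

lemma Pi_infl:
  assumes u: "u \<in> V" and v: "v \<in> V"
  shows "infl u (Pi v g) \<le> infl u g + (if adj u v then 2 * infl v g else 0)"
proof (rule infl_le)
  fix \<sigma> b assume s: "\<sigma> \<in> C" and bq: "b < q"
  define \<sigma>' where "\<sigma>' = \<sigma>(u := b)"
  have s': "\<sigma>' \<in> C" unfolding \<sigma>'_def using C_upd[OF s u bq] .
  have R0: "0 \<le> infl u g + (if adj u v then 2 * infl v g else 0)" using infl_nn[of u g] infl_nn[of v g] by auto
  show "\<bar>Pi v g \<sigma> - Pi v g (\<sigma>(u := b))\<bar> \<le> infl u g + (if adj u v then 2 * infl v g else 0)"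
  proof (cases "u = v")
    case True
    then show ?thesis using R0 by (simp add: Pi_indep)
  next
    case uv: False
    have tw: "\<sigma>'(v := a) = (\<sigma>(v := a))(u := b)" for a unfolding \<sigma>'_def using uv by (simp add: fun_upd_twist)
    have d1: "\<bar>g (\<sigma>(v := a)) - g (\<sigma>'(v := a))\<bar> \<le> infl u g" if "a < q" for a
      unfolding tw by (rule infl_ge[OF C_upd[OF s v that] bq])
    show ?thesis
    proof (cases "adj u v")
      case False
      have pe: "pk v \<sigma>' a = pk v \<sigma> a" for a
        by (rule pk_loc) (use False in \<open>auto simp: \<sigma>'_def\<close>)
      have "Pi v g \<sigma> - Pi v g \<sigma>' = (\<Sum>a<q. pk v \<sigma> a * (g (\<sigma>(v := a)) - g (\<sigma>'(v := a))))"
        unfolding Pi_def pe by (simp add: sum_subtractf algebra_simps)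
      also have "\<bar>\<dots>\<bar> \<le> infl u g" by (rule conv_bound[OF s v d1])
      finally show ?thesis using False by (simp add: \<sigma>'_def)
    next
      case True
      have sum1: "(\<Sum>a<q. pk v \<sigma> a) = 1" "(\<Sum>a<q. pk v \<sigma>' a) = 1" using pk_sum[OF s v] pk_sum[OF s' v] by auto
      have "Pi v g \<sigma> - Pi v g \<sigma>' = (\<Sum>a<q. pk v \<sigma> a * (g (\<sigma>(v := a)) - g (\<sigma>'(v := a))))
          + (\<Sum>a<q. pk v \<sigma> a * (g (\<sigma>'(v := a)) - g \<sigma>')) - (\<Sum>a<q. pk v \<sigma>' a * (g (\<sigma>'(v := a)) - g \<sigma>'))"
      proof -
        have "(\<Sum>a<q. pk v \<sigma> a * (g (\<sigma>(v := a)) - g (\<sigma>'(v := a)))) = Pi v g \<sigma> - (\<Sum>a<q. pk v \<sigma> a * g (\<sigma>'(v := a)))"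
          unfolding Pi_def by (simp add: sum_subtractf algebra_simps)
        moreover have "(\<Sum>a<q. pk v \<sigma> a * (g (\<sigma>'(v := a)) - g \<sigma>')) = (\<Sum>a<q. pk v \<sigma> a * g (\<sigma>'(v := a))) - g \<sigma>'"
          using pk_sum_c[OF s v] by (simp add: sum_subtractf algebra_simps)
        moreover have "(\<Sum>a<q. pk v \<sigma>' a * (g (\<sigma>'(v := a)) - g \<sigma>')) = Pi v g \<sigma>' - g \<sigma>'"
          unfolding Pi_def using pk_sum_c[OF s' v] by (simp add: sum_subtractf algebra_simps)
        ultimately show ?thesis by simp
      qed
      moreover have "\<bar>\<Sum>a<q. pk v \<sigma> a * (g (\<sigma>(v := a)) - g (\<sigma>'(v := a)))\<bar> \<le> infl u g"
        by (rule conv_bound[OF s v d1])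
      moreover have "\<bar>\<Sum>a<q. pk v \<sigma> a * (g (\<sigma>'(v := a)) - g \<sigma>')\<bar> \<le> infl v g"
        by (rule conv_bound[OF s v]) (use infl_ge[OF s'] in \<open>auto simp: abs_minus_commute\<close>)
      moreover have "\<bar>\<Sum>a<q. pk v \<sigma>' a * (g (\<sigma>'(v := a)) - g \<sigma>')\<bar> \<le> infl v g"
        by (rule conv_bound[OF s' v]) (use infl_ge[OF s'] in \<open>auto simp: abs_minus_commute\<close>)
      ultimately have "\<bar>Pi v g \<sigma> - Pi v g \<sigma>'\<bar> \<le> infl u g + 2 * infl v g"
        by (smt (verit, best) abs_triangle_ineq abs_triangle_ineq4)
      then show ?thesis using True unfolding \<sigma>'_def by simp
    qed
  qed
qed

lemma K_infl:
  assumes u: "u \<in> V"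
  shows "infl u (Kop g) \<le> infl u g + 2 * (\<Sum>v\<in>V. if adj u v then infl v g else 0) / real N"
proof -
  have Np: "real N > 0" using N_pos by simp
  have "infl u (Kop g) \<le> (\<Sum>v\<in>V. infl u (Pi v g)) / real N"
  proof (rule infl_le)
    fix \<sigma> a assume s: "\<sigma> \<in> C" and a: "a < q"
    have "\<bar>Kop g \<sigma> - Kop g (\<sigma>(u := a))\<bar> = \<bar>\<Sum>v\<in>V. Pi v g \<sigma> - Pi v g (\<sigma>(u := a))\<bar> / real N"
      unfolding Kop_def using Np by (simp add: sum_subtractf diff_divide_distrib[symmetric])
    also have "\<dots> \<le> (\<Sum>v\<in>V. \<bar>Pi v g \<sigma> - Pi v g (\<sigma>(u := a))\<bar>) / real N"
      using Np by (intro divide_right_mono sum_abs) auto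
    also have "\<dots> \<le> (\<Sum>v\<in>V. infl u (Pi v g)) / real N"
      using Np by (intro divide_right_mono sum_mono infl_ge[OF s a]) auto
    finally show "\<bar>Kop g \<sigma> - Kop g (\<sigma>(u := a))\<bar> \<le> (\<Sum>v\<in>V. infl u (Pi v g)) / real N" .
  qed
  also have "\<dots> \<le> (\<Sum>v\<in>V. infl u g + (if adj u v then 2 * infl v g else 0)) / real N"
    using Np by (intro divide_right_mono sum_mono Pi_infl[OF u]) auto
  also have "\<dots> = infl u g + 2 * (\<Sum>v\<in>V. if adj u v then infl v g else 0) / real N"
  proof -
    have "(\<Sum>v\<in>V. infl u g + (if adj u v then 2 * infl v g else 0)) = real N * infl u g + 2 * (\<Sum>v\<in>V. if adj u v then infl v g else 0)"
    proof -
      have "(\<Sum>v\<in>V. infl u g + (if adj u v then 2 * infl v g else 0)) = (\<Sum>v\<in>V. infl u g) + 2 * (\<Sum>v\<in>V. if adj u v then infl v g else 0)"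
        unfolding sum_distrib_left sum.distrib[symmetric] by (intro sum.cong refl) auto
      then show ?thesis by simp
    qed
    then show ?thesis using Np by (simp add: field_simps)
  qed
  finally show ?thesis .
qed

lemma nbr_bound:
  assumes v: "v \<in> V" and g1: "1 \<le> (\<gamma>::real)"
  shows "(\<Sum>u\<in>V. if adj u v then \<gamma> ^ (n - length u) else 0) \<le> (\<gamma> + b) * \<gamma> ^ (n - length v)"
proof -
  define w where "w u = \<gamma> ^ (n - length u)" for u :: "nat list"
  have wnn: "0 \<le> w u" for u unfolding w_def using g1 by simp
  have lv: "length v \<le> n" using v unfolding tree_vertices_def by simp
  have "(\<Sum>u\<in>V. if adj u v then w u else 0) = (\<Sum>u\<in>{u\<in>V. adj u v}. w u)"
    using finite_V by (simp add: sum.inter_filter)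
  also have "\<dots> \<le> (\<Sum>u\<in>insert (butlast v) ((\<lambda>i. v @ [i]) ` {..<b}). w u)"
  proof (rule sum_mono2)
    show "finite (insert (butlast v) ((\<lambda>i. v @ [i]) ` {..<b}))" by simp
    show "{u \<in> V. adj u v} \<subseteq> insert (butlast v) ((\<lambda>i. v @ [i]) ` {..<b})"
    proof
      fix u assume "u \<in> {u \<in> V. adj u v}"
      then have uV: "u \<in> V" and a: "adj u v" by auto
      show "u \<in> insert (butlast v) ((\<lambda>i. v @ [i]) ` {..<b})"
      proof (cases "u = butlast v")
        case False
        then have un: "u \<noteq> []" and bu: "butlast u = v" using a unfolding adj_def by auto
        then have "u = v @ [last u]" by (metis append_butlast_last_id)
        moreover have "last u < b" using uV un unfolding tree_vertices_def by (auto dest!: last_in_set[of u])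
        ultimately show ?thesis by blast
      qed simp
    qed
  qed (rule wnn)
  also have "\<dots> \<le> w (butlast v) + (\<Sum>u\<in>(\<lambda>i. v @ [i]) ` {..<b}. w u)"
    by (simp add: sum.insert_if wnn)
  also have "(\<Sum>u\<in>(\<lambda>i. v @ [i]) ` {..<b}. w u) \<le> (\<Sum>i<b. w (v @ [i]))"
    using sum_image_le[of "{..<b}" w "\<lambda>i. v @ [i]"] wnn by (simp add: comp_def)
  also have "(\<Sum>i<b. w (v @ [i])) \<le> (\<Sum>i<b. \<gamma> ^ (n - length v))"
    unfolding w_def using g1 by (intro sum_mono power_increasing) auto
  also have "w (butlast v) \<le> \<gamma> * \<gamma> ^ (n - length v)"
  proof -
    have "w (butlast v) \<le> \<gamma> ^ Suc (n - length v)"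
      unfolding w_def using g1 lv by (intro power_increasing) auto
    then show ?thesis by simp
  qed
  finally show ?thesis unfolding w_def by (simp add: algebra_simps)
qed

definition Pot :: "real \<Rightarrow> ((nat list \<Rightarrow> nat) \<Rightarrow> real) \<Rightarrow> real" where
  "Pot \<gamma> g = (\<Sum>u\<in>V. \<gamma> ^ (n - length u) * infl u g)"

lemma Pot_nn: "0 \<le> \<gamma> \<Longrightarrow> 0 \<le> Pot \<gamma> g"
  unfolding Pot_def by (intro sum_nonneg mult_nonneg_nonneg infl_nn) auto

lemma Pot_K:
  assumes g1: "1 \<le> \<gamma>"
  shows "Pot \<gamma> (Kop g) \<le> (1 + 2 * (\<gamma> + b) / real N) * Pot \<gamma> g"
proof -
  have Np: "real N > 0" using N_pos by simp
  have "Pot \<gamma> (Kop g) \<le> (\<Sum>u\<in>V. \<gamma> ^ (n - length u) * (infl u g + 2 * (\<Sum>v\<in>V. if adj u v then infl v g else 0) / real N))"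
    unfolding Pot_def using g1 by (intro sum_mono mult_left_mono K_infl) auto
  also have "\<dots> = Pot \<gamma> g + 2 / real N * (\<Sum>v\<in>V. infl v g * (\<Sum>u\<in>V. if adj u v then \<gamma> ^ (n - length u) else 0))"
  proof -
    have "(\<Sum>u\<in>V. \<gamma> ^ (n - length u) * (\<Sum>v\<in>V. if adj u v then infl v g else 0))
        = (\<Sum>u\<in>V. \<Sum>v\<in>V. if adj u v then \<gamma> ^ (n - length u) * infl v g else 0)"
      unfolding sum_distrib_left by (intro sum.cong refl) auto
    also have "\<dots> = (\<Sum>v\<in>V. \<Sum>u\<in>V. if adj u v then \<gamma> ^ (n - length u) * infl v g else 0)"
      by (rule sum.swap)
    also have "\<dots> = (\<Sum>v\<in>V. infl v g * (\<Sum>u\<in>V. if adj u v then \<gamma> ^ (n - length u) else 0))"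
      unfolding sum_distrib_left by (intro sum.cong refl) auto
    finally have sw: "(\<Sum>u\<in>V. \<gamma> ^ (n - length u) * (\<Sum>v\<in>V. if adj u v then infl v g else 0))
        = (\<Sum>v\<in>V. infl v g * (\<Sum>u\<in>V. if adj u v then \<gamma> ^ (n - length u) else 0))" .
    have e2: "(\<Sum>u\<in>V. \<gamma> ^ (n - length u) * (2 * (\<Sum>v\<in>V. if adj u v then infl v g else 0) / real N))
        = 2 / real N * (\<Sum>u\<in>V. \<gamma> ^ (n - length u) * (\<Sum>v\<in>V. if adj u v then infl v g else 0))"
      unfolding sum_distrib_left[of "2 / real N" "\<lambda>u. \<gamma> ^ (n - length u) * (\<Sum>v\<in>V. if adj u v then infl v g else 0)" V]
      by (intro sum.cong refl) simp
    show ?thesis unfolding Pot_def distrib_left sum.distrib e2 sw ..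
  qed
  also have "\<dots> \<le> Pot \<gamma> g + 2 / real N * (\<Sum>v\<in>V. infl v g * ((\<gamma> + b) * \<gamma> ^ (n - length v)))"
    using Np by (intro add_left_mono mult_left_mono sum_mono nbr_bound g1 infl_nn) auto
  also have "\<dots> = (1 + 2 * (\<gamma> + b) / real N) * Pot \<gamma> g"
    unfolding Pot_def by (simp add: sum_distrib_left algebra_simps sum_divide_distrib add_divide_distrib sum.distrib)
  finally show ?thesis .
qed

lemma Pot_iter:
  assumes g1: "1 \<le> \<gamma>"
  shows "Pot \<gamma> ((Kop ^^ j) g) \<le> (1 + 2 * (\<gamma> + b) / real N) ^ j * Pot \<gamma> g"
proof (induction j)
  case (Suc j)
  have Np: "real N > 0" using N_pos by simp
  have f0: "0 \<le> 1 + 2 * (\<gamma> + b) / real N" using g1 Np by simp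
  have "Pot \<gamma> ((Kop ^^ Suc j) g) \<le> (1 + 2 * (\<gamma> + b) / real N) * Pot \<gamma> ((Kop ^^ j) g)"
    using Pot_K[OF g1] by simp
  also have "\<dots> \<le> (1 + 2 * (\<gamma> + b) / real N) * ((1 + 2 * (\<gamma> + b) / real N) ^ j * Pot \<gamma> g)"
    by (rule mult_left_mono[OF Suc.IH f0])
  finally show ?case by simp
qed simp

lemma infl_root_Pot:
  assumes g1: "1 \<le> \<gamma>"
  shows "\<gamma> ^ n * infl [] g \<le> Pot \<gamma> g"
proof -
  have "Pot \<gamma> g = \<gamma> ^ n * infl [] g + (\<Sum>u\<in>V - {[]}. \<gamma> ^ (n - length u) * infl u g)"
    unfolding Pot_def using sum.remove[OF finite_V nil_V, of "\<lambda>u. \<gamma> ^ (n - length u) * infl u g"] by simp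
  moreover have "0 \<le> (\<Sum>u\<in>V - {[]}. \<gamma> ^ (n - length u) * infl u g)"
    using g1 by (intro sum_nonneg mult_nonneg_nonneg infl_nn) auto
  ultimately have "\<gamma> ^ n * infl [] g \<le> Pot \<gamma> g" by linarith
  then show ?thesis by simp
qed

lemma card_leaves: "card {u\<in>V. length u = n} = b ^ n"
proof -
  have "{u\<in>V. length u = n} = {xs. set xs \<subseteq> {..<b} \<and> length xs = n}"
    unfolding tree_vertices_def by auto
  then show ?thesis using card_lists_length_eq[of "{..<b}" n] by simp
qed

lemma Pot_init:
  assumes g1: "1 \<le> \<gamma>"
    and phi_b: "\<And>\<sigma>. \<sigma> \<in> C \<Longrightarrow> \<bar>\<phi> \<sigma>\<bar> \<le> 1"
    and phi_l: "\<And>\<sigma> u a. \<sigma> \<in> C \<Longrightarrow> u \<in> V \<Longrightarrow> length u < n \<Longrightarrow> a < q \<Longrightarrow> \<phi> (\<sigma>(u := a)) = \<phi> \<sigma>"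
  shows "Pot \<gamma> \<phi> \<le> 2 * real b ^ n"
proof -
  have "Pot \<gamma> \<phi> \<le> (\<Sum>u\<in>V. if length u = n then 2 else 0)"
    unfolding Pot_def
  proof (intro sum_mono)
    fix u assume u: "u \<in> V"
    show "\<gamma> ^ (n - length u) * infl u \<phi> \<le> (if length u = n then 2 else 0)"
    proof (cases "length u = n")
      case True
      have "infl u \<phi> \<le> 2"
      proof (rule infl_le)
        fix \<sigma> a assume s: "\<sigma> \<in> C" and a: "a < q"
        show "\<bar>\<phi> \<sigma> - \<phi> (\<sigma>(u := a))\<bar> \<le> 2"
          using phi_b[OF s] phi_b[OF C_upd[OF s u a]] by linarith
      qed
      then show ?thesis using True by simp
    next
      case False
      then have "length u < n" using u unfolding tree_vertices_def by simp
      then have "infl u \<phi> \<le> 0" by (intro infl_le) (simp add: phi_l u)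
      then show ?thesis using False infl_nn[of u \<phi>] g1 by simp
    qed
  qed
  also have "\<dots> = (\<Sum>u\<in>{u\<in>V. length u = n}. 2)"
    by (rule sum.inter_filter[OF finite_V, symmetric])
  also have "\<dots> = 2 * real (card {u\<in>V. length u = n})"
    by simp
  also have "\<dots> = 2 * real b ^ n" by (simp add: card_leaves)
  finally show ?thesis .
qed

end

context tp begin

lemma h_Pi:
  assumes hinv: "\<And>\<sigma> v a. \<sigma> \<in> C \<Longrightarrow> v \<in> V \<Longrightarrow> v \<noteq> [] \<Longrightarrow> a < q \<Longrightarrow> h (\<sigma>(v := a)) = h \<sigma>"
    and v: "v \<in> V" "v \<noteq> []"
  shows "(\<Sum>\<sigma>\<in>C. mu \<sigma> * (h \<sigma> * Pi v g \<sigma>)) = (\<Sum>\<sigma>\<in>C. mu \<sigma> * (h \<sigma> * g \<sigma>))"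
proof -
  have "(\<Sum>\<sigma>\<in>C. mu \<sigma> * (h \<sigma> * Pi v g \<sigma>)) = (\<Sum>\<sigma>\<in>C. mu \<sigma> * Pi v (\<lambda>\<tau>. h \<tau> * g \<tau>) \<sigma>)"
  proof (intro sum.cong refl)
    fix \<sigma> assume s: "\<sigma> \<in> C"
    have "Pi v (\<lambda>\<tau>. h \<tau> * g \<tau>) \<sigma> = (\<Sum>a<q. h \<sigma> * (pk v \<sigma> a * g (\<sigma>(v := a))))"
      unfolding Pi_def by (intro sum.cong refl) (simp add: hinv[OF s v])
    then show "mu \<sigma> * (h \<sigma> * Pi v g \<sigma>) = mu \<sigma> * Pi v (\<lambda>\<tau>. h \<tau> * g \<tau>) \<sigma>"
      unfolding Pi_def by (simp add: sum_distrib_left)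
  qed
  also have "\<dots> = (\<Sum>\<sigma>\<in>C. mu \<sigma> * (h \<sigma> * g \<sigma>))" by (rule stat[OF v(1)])
  finally show ?thesis .
qed

lemma step_err:
  assumes hinv: "\<And>\<sigma> v a. \<sigma> \<in> C \<Longrightarrow> v \<in> V \<Longrightarrow> v \<noteq> [] \<Longrightarrow> a < q \<Longrightarrow> h (\<sigma>(v := a)) = h \<sigma>"
    and hb: "\<And>\<sigma>. \<sigma> \<in> C \<Longrightarrow> \<bar>h \<sigma>\<bar> \<le> 1"
  shows "\<bar>(\<Sum>\<sigma>\<in>C. mu \<sigma> * (h \<sigma> * g \<sigma>)) - (\<Sum>\<sigma>\<in>C. mu \<sigma> * (h \<sigma> * Kop g \<sigma>))\<bar> \<le> infl [] g / real N"
proof -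
  have Np: "real N > 0" using N_pos by simp
  define Y where "Y = (\<Sum>\<sigma>\<in>C. mu \<sigma> * (h \<sigma> * g \<sigma>))"
  define X where "X v = (\<Sum>\<sigma>\<in>C. mu \<sigma> * (h \<sigma> * Pi v g \<sigma>))" for v
  define S where "S = (\<Sum>\<sigma>\<in>C. mu \<sigma> * (h \<sigma> * (g \<sigma> - Pi [] g \<sigma>)))"
  have K1: "(\<Sum>\<sigma>\<in>C. mu \<sigma> * (h \<sigma> * Kop g \<sigma>)) = (\<Sum>v\<in>V. X v) / real N"
    unfolding Kop_def X_def
    by (simp add: sum_divide_distrib[symmetric] sum_distrib_left sum.swap[of _ C V] mult_ac)
  have K2: "(\<Sum>v\<in>V. X v) = X [] + (\<Sum>v\<in>V - {[]}. X v)" by (rule sum.remove[OF finite_V nil_V])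
  have K3: "(\<Sum>v\<in>V - {[]}. X v) = (\<Sum>v\<in>V - {[]}. Y)"
  proof (intro sum.cong refl)
    fix v assume "v \<in> V - {[]}"
    then show "X v = Y" using h_Pi[where h=h, OF hinv, of v g] unfolding X_def Y_def by auto
  qed
  have K4: "(\<Sum>v\<in>V - {[]}. Y) = (real N - 1) * Y"
  proof -
    have "card (V - {[]}) = N - 1" using finite_V nil_V by (simp add: card_Diff_singleton)
    moreover have "N \<ge> 1" using N_pos by simp
    ultimately show ?thesis by (simp add: of_nat_diff)
  qed
  have e: "Y - (\<Sum>\<sigma>\<in>C. mu \<sigma> * (h \<sigma> * Kop g \<sigma>)) = (Y - X []) / real N"
    unfolding K1 K2 K3 K4 using Np by (simp add: field_simps)
  have eS: "Y - X [] = S"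
    unfolding X_def Y_def S_def by (simp add: sum_subtractf right_diff_distrib)
  have bnd: "\<bar>S\<bar> \<le> (\<Sum>\<sigma>\<in>C. mu \<sigma> * infl [] g)"
    unfolding S_def
  proof (rule order_trans[OF sum_abs], intro sum_mono)
    fix \<sigma> assume s: "\<sigma> \<in> C"
    have d: "\<bar>g \<sigma> - Pi [] g \<sigma>\<bar> \<le> infl [] g"
    proof -
      have "g \<sigma> - Pi [] g \<sigma> = (\<Sum>a<q. pk [] \<sigma> a * (g \<sigma> - g (\<sigma>([] := a))))"
        unfolding Pi_def using pk_sum_c[OF s nil_V] by (simp add: sum_subtractf right_diff_distrib)
      moreover have "\<bar>\<Sum>a<q. pk [] \<sigma> a * (g \<sigma> - g (\<sigma>([] := a)))\<bar> \<le> infl [] g"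
        by (rule conv_bound[OF s nil_V infl_ge[OF s]])
      ultimately show ?thesis by simp
    qed
    have "\<bar>h \<sigma> * (g \<sigma> - Pi [] g \<sigma>)\<bar> \<le> 1 * infl [] g"
      unfolding abs_mult using hb[OF s] d by (intro mult_mono) auto
    then have "mu \<sigma> * \<bar>h \<sigma> * (g \<sigma> - Pi [] g \<sigma>)\<bar> \<le> mu \<sigma> * infl [] g"
      using mu_nn[of \<sigma>] by (simp add: mult_left_mono)
    then show "\<bar>mu \<sigma> * (h \<sigma> * (g \<sigma> - Pi [] g \<sigma>))\<bar> \<le> mu \<sigma> * infl [] g"
      using mu_nn[of \<sigma>] by (simp add: abs_mult)
  qed
  have "(\<Sum>\<sigma>\<in>C. mu \<sigma> * infl [] g) = infl [] g" using mu_total by (simp add: sum_distrib_right[symmetric])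
  with bnd have "\<bar>S\<bar> \<le> infl [] g" by simp
  then have "\<bar>Y - X []\<bar> / real N \<le> infl [] g / real N" unfolding eS using Np by (simp add: divide_right_mono)
  then show ?thesis unfolding Y_def[symmetric] e using Np by simp
qed

lemma tele_err:
  assumes hinv: "\<And>\<sigma> v a. \<sigma> \<in> C \<Longrightarrow> v \<in> V \<Longrightarrow> v \<noteq> [] \<Longrightarrow> a < q \<Longrightarrow> h (\<sigma>(v := a)) = h \<sigma>"
    and hb: "\<And>\<sigma>. \<sigma> \<in> C \<Longrightarrow> \<bar>h \<sigma>\<bar> \<le> 1"
  shows "\<bar>(\<Sum>\<sigma>\<in>C. mu \<sigma> * (h \<sigma> * g \<sigma>)) - (\<Sum>\<sigma>\<in>C. mu \<sigma> * (h \<sigma> * (Kop ^^ m) g \<sigma>))\<bar>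
          \<le> (\<Sum>j<m. infl [] ((Kop ^^ j) g) / real N)"
proof (induction m)
  case (Suc m)
  have "\<bar>(\<Sum>\<sigma>\<in>C. mu \<sigma> * (h \<sigma> * (Kop ^^ m) g \<sigma>)) - (\<Sum>\<sigma>\<in>C. mu \<sigma> * (h \<sigma> * Kop ((Kop ^^ m) g) \<sigma>))\<bar>
      \<le> infl [] ((Kop ^^ m) g) / real N"
    using step_err[where h=h, OF hinv hb, of "(Kop ^^ m) g"] by simp
  with Suc.IH show ?case by simp
qed simp

lemma Kop_cong: "(\<And>\<tau>. \<tau> \<in> C \<Longrightarrow> g \<tau> = g' \<tau>) \<Longrightarrow> \<sigma> \<in> C \<Longrightarrow> Kop g \<sigma> = Kop g' \<sigma>"
  unfolding Kop_def Pi_def by (intro arg_cong[where f="\<lambda>x. x / real N"] sum.cong refl) (simp add: C_upd)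

lemma Kiter_const: "\<sigma> \<in> C \<Longrightarrow> (Kop ^^ m) (\<lambda>\<tau>. f \<tau> + c) \<sigma> = (Kop ^^ m) f \<sigma> + c"
proof (induction m arbitrary: \<sigma>)
  case (Suc m)
  have "(Kop ^^ Suc m) (\<lambda>\<tau>. f \<tau> + c) \<sigma> = Kop ((Kop ^^ m) (\<lambda>\<tau>. f \<tau> + c)) \<sigma>" by simp
  also have "\<dots> = Kop (\<lambda>\<tau>. (Kop ^^ m) f \<tau> + c) \<sigma>"
    by (rule Kop_cong) (simp_all add: Suc.IH Suc.prems)
  also have "\<dots> = (Kop ^^ Suc m) f \<sigma> + c" using K_const[OF Suc.prems] by simp
  finally show ?case .
qed simp

lemma main_term:
  assumes lam: "\<And>f. lam * tm_variance q M p b n f \<le> dirichlet_form q M p b n f"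
    and hb: "\<And>\<sigma>. \<sigma> \<in> C \<Longrightarrow> \<bar>h \<sigma>\<bar> \<le> 1" and hm: "(\<Sum>\<sigma>\<in>C. mu \<sigma> * h \<sigma>) = 0"
    and pb: "\<And>\<sigma>. \<sigma> \<in> C \<Longrightarrow> \<bar>\<phi> \<sigma>\<bar> \<le> 1"
  shows "\<bar>\<Sum>\<sigma>\<in>C. mu \<sigma> * (h \<sigma> * (Kop ^^ m) \<phi> \<sigma>)\<bar> \<le> 5/2 * exp (- lam * m / (2 * N))"
proof -
  define c where "c = (\<Sum>\<sigma>\<in>C. mu \<sigma> * \<phi> \<sigma>)"
  define \<phi>0 where "\<phi>0 \<sigma> = \<phi> \<sigma> - c" for \<sigma>
  have cb: "\<bar>c\<bar> \<le> 1"
  proof -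
    have "\<bar>c\<bar> \<le> (\<Sum>\<sigma>\<in>C. \<bar>mu \<sigma> * \<phi> \<sigma>\<bar>)" unfolding c_def by (rule sum_abs)
    also have "\<dots> \<le> (\<Sum>\<sigma>\<in>C. mu \<sigma> * 1)"
    proof (rule sum_mono)
      fix \<sigma> assume s: "\<sigma> \<in> C"
      have "mu \<sigma> * \<bar>\<phi> \<sigma>\<bar> \<le> mu \<sigma> * 1" by (rule mult_left_mono[OF pb[OF s] mu_nn])
      then show "\<bar>mu \<sigma> * \<phi> \<sigma>\<bar> \<le> mu \<sigma> * 1" using mu_nn[of \<sigma>] by (simp add: abs_mult)
    qed
    finally show ?thesis using mu_total by simp
  qed
  have phi_eq: "\<phi> = (\<lambda>\<tau>. \<phi>0 \<tau> + c)" unfolding \<phi>0_def by simp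
  have m0: "(\<Sum>\<sigma>\<in>C. mu \<sigma> * \<phi>0 \<sigma>) = 0"
  proof -
    have "(\<Sum>\<sigma>\<in>C. mu \<sigma> * \<phi>0 \<sigma>) = (\<Sum>\<sigma>\<in>C. mu \<sigma> * \<phi> \<sigma>) - (\<Sum>\<sigma>\<in>C. mu \<sigma>) * c"
      unfolding \<phi>0_def by (simp add: right_diff_distrib sum_subtractf sum_distrib_right)
    then show ?thesis unfolding mu_total c_def[symmetric] by simp
  qed
  define g where "g = (Kop ^^ m) \<phi>0"
  define t where "t = exp (- lam * m / (2 * N))"
  have tpos: "t > 0" unfolding t_def by simp
  have t2: "t\<^sup>2 = exp (- lam * m / N)" unfolding t_def by (simp add: power2_eq_square exp_add[symmetric])
  have "(\<Sum>\<sigma>\<in>C. mu \<sigma> * (h \<sigma> * (Kop ^^ m) \<phi> \<sigma>)) = (\<Sum>\<sigma>\<in>C. mu \<sigma> * (h \<sigma> * g \<sigma>)) + c * (\<Sum>\<sigma>\<in>C. mu \<sigma> * h \<sigma>)"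
  proof -
    have "(\<Sum>\<sigma>\<in>C. mu \<sigma> * (h \<sigma> * (Kop ^^ m) \<phi> \<sigma>)) = (\<Sum>\<sigma>\<in>C. mu \<sigma> * (h \<sigma> * g \<sigma>) + c * (mu \<sigma> * h \<sigma>))"
    proof (intro sum.cong refl)
      fix \<sigma> assume s: "\<sigma> \<in> C"
      have "(Kop ^^ m) \<phi> \<sigma> = g \<sigma> + c" unfolding g_def phi_eq by (rule Kiter_const[OF s])
      then show "mu \<sigma> * (h \<sigma> * (Kop ^^ m) \<phi> \<sigma>) = mu \<sigma> * (h \<sigma> * g \<sigma>) + c * (mu \<sigma> * h \<sigma>)"
        by (simp add: algebra_simps)
    qed
    then show ?thesis by (simp add: sum.distrib sum_distrib_left)
  qed
  also have "\<dots> = (\<Sum>\<sigma>\<in>C. mu \<sigma> * (h \<sigma> * g \<sigma>))" using hm by simp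
  finally have e: "(\<Sum>\<sigma>\<in>C. mu \<sigma> * (h \<sigma> * (Kop ^^ m) \<phi> \<sigma>)) = (\<Sum>\<sigma>\<in>C. mu \<sigma> * (h \<sigma> * g \<sigma>))" .
  have S: "(\<Sum>\<sigma>\<in>C. mu \<sigma> * (g \<sigma>)\<^sup>2) \<le> exp (- lam * m / N) * 4"
  proof -
    have A: "(\<Sum>\<sigma>\<in>C. mu \<sigma> * (g \<sigma>)\<^sup>2) \<le> exp (- lam * m / N) * (\<Sum>\<sigma>\<in>C. mu \<sigma> * (\<phi>0 \<sigma>)\<^sup>2)"
      unfolding g_def by (rule K_iter[OF lam m0])
    have "(\<Sum>\<sigma>\<in>C. mu \<sigma> * (\<phi>0 \<sigma>)\<^sup>2) \<le> (\<Sum>\<sigma>\<in>C. mu \<sigma> * 4)"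
    proof (intro sum_mono mult_left_mono mu_nn)
      fix \<sigma> assume s: "\<sigma> \<in> C"
      have "\<bar>\<phi>0 \<sigma>\<bar> \<le> 2" unfolding \<phi>0_def using pb[OF s] cb by linarith
      then have "\<bar>\<phi>0 \<sigma>\<bar>\<^sup>2 \<le> 2\<^sup>2" by (intro power_mono) auto
      then show "(\<phi>0 \<sigma>)\<^sup>2 \<le> 4" by simp
    qed
    also have "\<dots> = 4" using mu_total by (simp add: sum_distrib_right[symmetric])
    finally have B: "(\<Sum>\<sigma>\<in>C. mu \<sigma> * (\<phi>0 \<sigma>)\<^sup>2) \<le> 4" .
    have "exp (- lam * m / N) * (\<Sum>\<sigma>\<in>C. mu \<sigma> * (\<phi>0 \<sigma>)\<^sup>2) \<le> exp (- lam * m / N) * 4"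
      by (rule mult_left_mono[OF B]) simp
    with A show ?thesis by linarith
  qed
  have "\<bar>\<Sum>\<sigma>\<in>C. mu \<sigma> * (h \<sigma> * g \<sigma>)\<bar> \<le> (\<Sum>\<sigma>\<in>C. mu \<sigma> * ((t\<^sup>2 + (g \<sigma>)\<^sup>2) / (2 * t)))"
  proof (rule order_trans[OF sum_abs], intro sum_mono)
    fix \<sigma> assume s: "\<sigma> \<in> C"
    have "\<bar>h \<sigma> * g \<sigma>\<bar> \<le> \<bar>g \<sigma>\<bar>" using hb[OF s] by (simp add: abs_mult mult_left_le_one_le)
    also have "\<bar>g \<sigma>\<bar> \<le> (t\<^sup>2 + (g \<sigma>)\<^sup>2) / (2 * t)"
    proof -
      have "0 \<le> (\<bar>g \<sigma>\<bar> - t)\<^sup>2" by simp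
      then have "2 * t * \<bar>g \<sigma>\<bar> \<le> t\<^sup>2 + (g \<sigma>)\<^sup>2" by (simp add: power2_eq_square algebra_simps)
      then show ?thesis using tpos by (simp add: field_simps)
    qed
    finally have X: "\<bar>h \<sigma> * g \<sigma>\<bar> \<le> (t\<^sup>2 + (g \<sigma>)\<^sup>2) / (2 * t)" .
    have "\<bar>mu \<sigma> * (h \<sigma> * g \<sigma>)\<bar> = mu \<sigma> * \<bar>h \<sigma> * g \<sigma>\<bar>" using mu_nn[of \<sigma>] by (simp add: abs_mult)
    also have "\<dots> \<le> mu \<sigma> * ((t\<^sup>2 + (g \<sigma>)\<^sup>2) / (2 * t))" by (rule mult_left_mono[OF X mu_nn])
    finally show "\<bar>mu \<sigma> * (h \<sigma> * g \<sigma>)\<bar> \<le> mu \<sigma> * ((t\<^sup>2 + (g \<sigma>)\<^sup>2) / (2 * t))" .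
  qed
  also have "\<dots> = (\<Sum>\<sigma>\<in>C. (t\<^sup>2 * mu \<sigma> + mu \<sigma> * (g \<sigma>)\<^sup>2) / (2 * t))"
    by (intro sum.cong refl) (simp add: algebra_simps add_divide_distrib)
  also have "\<dots> = (\<Sum>\<sigma>\<in>C. t\<^sup>2 * mu \<sigma> + mu \<sigma> * (g \<sigma>)\<^sup>2) / (2 * t)"
    by (rule sum_divide_distrib[symmetric])
  also have "\<dots> = (t\<^sup>2 * (\<Sum>\<sigma>\<in>C. mu \<sigma>) + (\<Sum>\<sigma>\<in>C. mu \<sigma> * (g \<sigma>)\<^sup>2)) / (2 * t)"
    by (simp only: sum.distrib sum_distrib_left)
  also have "\<dots> \<le> (t\<^sup>2 + t\<^sup>2 * 4) / (2 * t)"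
  proof (rule divide_right_mono)
    show "t\<^sup>2 * (\<Sum>\<sigma>\<in>C. mu \<sigma>) + (\<Sum>\<sigma>\<in>C. mu \<sigma> * (g \<sigma>)\<^sup>2) \<le> t\<^sup>2 + t\<^sup>2 * 4"
      using S unfolding mu_total t2 by simp
    show "0 \<le> 2 * t" using tpos by simp
  qed
  also have "\<dots> = 5/2 * t"
  proof -
    have "t\<^sup>2 + t\<^sup>2 * 4 = (5/2 * t) * (2 * t)" by (simp add: power2_eq_square algebra_simps)
    then show ?thesis using tpos by simp
  qed
  finally show ?thesis unfolding e t_def .
qed

end

definition dl :: "nat \<Rightarrow> real" where "dl b = 1 / (2 * (exp 2 * real b + real b))"

context tp begin

lemma infl_decay:
  assumes b1: "1 \<le> b"
    and pb: "\<And>\<sigma>. \<sigma> \<in> C \<Longrightarrow> \<bar>\<phi> \<sigma>\<bar> \<le> 1"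
    and phi_l: "\<And>\<sigma> u a. \<sigma> \<in> C \<Longrightarrow> u \<in> V \<Longrightarrow> length u < n \<Longrightarrow> a < q \<Longrightarrow> \<phi> (\<sigma>(u := a)) = \<phi> \<sigma>"
    and j: "real j \<le> dl b * n * N"
  shows "infl [] ((Kop ^^ j) \<phi>) \<le> 2 * exp (- real n)"
proof -
  define \<gamma> where "\<gamma> = exp 2 * real b"
  have bpos: "real b \<ge> 1" using b1 by simp
  have g1: "1 \<le> \<gamma>" unfolding \<gamma>_def using bpos
    by (metis exp_ge_add_one_self le_add_same_cancel2 mult_mono' one_le_numeral order.trans exp_gt_zero less_le_not_le mult_1_right zero_le_one)
  have Np: "real N > 0" using N_pos by simp
  define x where "x = 2 * (\<gamma> + b) / real N"
  have x0: "0 \<le> x" unfolding x_def using g1 Np by simp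
  have "\<gamma> ^ n * infl [] ((Kop ^^ j) \<phi>) \<le> Pot \<gamma> ((Kop ^^ j) \<phi>)" by (rule infl_root_Pot[OF g1])
  also have "\<dots> \<le> (1 + x) ^ j * Pot \<gamma> \<phi>" unfolding x_def by (rule Pot_iter[OF g1])
  also have "\<dots> \<le> exp (j * x) * (2 * real b ^ n)"
  proof (rule mult_mono)
    have "(1 + x) ^ j \<le> exp x ^ j" using x0 by (intro power_mono) auto
    then show "(1 + x) ^ j \<le> exp (j * x)" by (simp add: exp_of_nat_mult)
    show "Pot \<gamma> \<phi> \<le> 2 * real b ^ n" by (rule Pot_init[OF g1 pb phi_l])
    show "0 \<le> exp (j * x)" by simp
    show "0 \<le> Pot \<gamma> \<phi>" using g1 by (intro Pot_nn) simp
  qed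
  also have "\<dots> \<le> exp (real n) * (2 * real b ^ n)"
  proof -
    have "j * x \<le> dl b * n * N * x" using j x0 by (intro mult_right_mono) auto
    also have "dl b * n * N * x = real n"
    proof -
      define G where "G = exp 2 * real b + real b"
      have G0: "G > 0" unfolding G_def using bpos by (simp add: add_pos_pos)
      have e1: "dl b = 1 / (2 * G)" and e2: "x = 2 * G / real N" unfolding dl_def G_def x_def \<gamma>_def by simp_all
      show ?thesis unfolding e1 e2 using G0 Np by (simp add: field_simps)
    qed
    finally have "exp (j * x) \<le> exp (real n)" by simp
    then show ?thesis using bpos by (intro mult_right_mono) auto
  qed
  finally have A: "\<gamma> ^ n * infl [] ((Kop ^^ j) \<phi>) \<le> exp (real n) * (2 * real b ^ n)" .
  have "\<gamma> ^ n = exp (2 * real n) * real b ^ n"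
    unfolding \<gamma>_def by (simp add: power_mult_distrib exp_of_nat_mult[symmetric] mult.commute)
  moreover have "exp (- real n) * exp (2 * real n) = exp (real n)" by (simp add: exp_add[symmetric])
  ultimately have "infl [] ((Kop ^^ j) \<phi>) * (exp (2 * real n) * real b ^ n) \<le> (2 * exp (- real n)) * (exp (2 * real n) * real b ^ n)"
    using A by (simp add: mult_ac)
  moreover have "0 < exp (2 * real n) * real b ^ n" using bpos by simp
  ultimately show ?thesis by (simp only: mult_le_cancel_right_pos)
qed


lemma dl_pos: "1 \<le> b \<Longrightarrow> 0 < dl b"
  unfolding dl_def by (simp add: add_pos_pos)

lemma n_exp: "real n * exp (- real n) \<le> 2 * exp (- real n / 2)"
proof -
  have "real n / 2 \<le> exp (real n / 2)" using exp_ge_add_one_self[of "real n / 2"] by linarith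
  then have "real n \<le> 2 * exp (real n / 2)" by simp
  then have "real n * exp (- real n) \<le> 2 * exp (real n / 2) * exp (- real n)" by (intro mult_right_mono) auto
  also have "\<dots> = 2 * exp (- real n / 2)" by (simp add: mult.assoc exp_add[symmetric])
  finally show ?thesis .
qed

lemma cov_bound:
  assumes b1: "1 \<le> b" and lam0: "0 \<le> lam"
    and lam: "\<And>f. lam * tm_variance q M p b n f \<le> dirichlet_form q M p b n f"
    and hinv: "\<And>\<sigma> v a. \<sigma> \<in> C \<Longrightarrow> v \<in> V \<Longrightarrow> v \<noteq> [] \<Longrightarrow> a < q \<Longrightarrow> h (\<sigma>(v := a)) = h \<sigma>"
    and hb: "\<And>\<sigma>. \<sigma> \<in> C \<Longrightarrow> \<bar>h \<sigma>\<bar> \<le> 1" and hm: "(\<Sum>\<sigma>\<in>C. mu \<sigma> * h \<sigma>) = 0"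
    and pb: "\<And>\<sigma>. \<sigma> \<in> C \<Longrightarrow> \<bar>\<phi> \<sigma>\<bar> \<le> 1"
    and phi_l: "\<And>\<sigma> u a. \<sigma> \<in> C \<Longrightarrow> u \<in> V \<Longrightarrow> length u < n \<Longrightarrow> a < q \<Longrightarrow> \<phi> (\<sigma>(u := a)) = \<phi> \<sigma>"
  shows "\<bar>\<Sum>\<sigma>\<in>C. mu \<sigma> * (h \<sigma> * \<phi> \<sigma>)\<bar> \<le> (5/2 * exp (lam / 2) + 4 * dl b) * exp (- min (lam * dl b / 2) (1/2) * n)"
proof -
  define \<delta> where "\<delta> = dl b"
  have d0: "0 < \<delta>" unfolding \<delta>_def by (rule dl_pos[OF b1])
  have Np: "real N > 0" using N_pos by simp
  define m where "m = nat \<lfloor>\<delta> * n * N\<rfloor>"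
  have nn: "0 \<le> \<delta> * n * N" using d0 by simp
  have m_le: "real m \<le> \<delta> * n * N" unfolding m_def using nn by (simp add: of_nat_nat)
  have m_ge: "\<delta> * n * N - 1 \<le> real m" unfolding m_def using nn by (simp add: of_nat_nat)
  define c where "c = min (lam * \<delta> / 2) (1/2)"
  have T: "\<bar>(\<Sum>\<sigma>\<in>C. mu \<sigma> * (h \<sigma> * \<phi> \<sigma>)) - (\<Sum>\<sigma>\<in>C. mu \<sigma> * (h \<sigma> * (Kop ^^ m) \<phi> \<sigma>))\<bar>
          \<le> (\<Sum>j<m. infl [] ((Kop ^^ j) \<phi>) / real N)"
    by (rule tele_err[where h=h, OF hinv hb])
  have "(\<Sum>j<m. infl [] ((Kop ^^ j) \<phi>) / real N) \<le> (\<Sum>j<m. 2 * exp (- real n) / real N)"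
  proof (intro sum_mono divide_right_mono)
    fix j assume "j \<in> {..<m}"
    then have "real j \<le> dl b * n * N" using m_le unfolding \<delta>_def by simp
    then show "infl [] ((Kop ^^ j) \<phi>) \<le> 2 * exp (- real n)"
    proof (rule infl_decay[where \<phi>=\<phi>, rotated 3])
      show "1 \<le> b" by (rule b1)
      show "\<And>\<sigma>. \<sigma> \<in> C \<Longrightarrow> \<bar>\<phi> \<sigma>\<bar> \<le> 1" by (rule pb)
      show "\<And>\<sigma> u a. \<sigma> \<in> C \<Longrightarrow> u \<in> V \<Longrightarrow> length u < n \<Longrightarrow> a < q \<Longrightarrow> \<phi> (\<sigma>(u := a)) = \<phi> \<sigma>" by (rule phi_l)
    qed
  qed (use Np in simp)
  also have "\<dots> = real m * (2 * exp (- real n) / real N)" by simp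
  also have "\<dots> \<le> \<delta> * n * N * (2 * exp (- real n) / real N)" using m_le by (intro mult_right_mono) auto
  also have "\<dots> = 2 * \<delta> * (real n * exp (- real n))" using Np by simp
  also have "\<dots> \<le> 2 * \<delta> * (2 * exp (- real n / 2))" using d0 n_exp by (intro mult_left_mono) auto
  also have "\<dots> \<le> 4 * \<delta> * exp (- c * n)"
  proof -
    have "c \<le> 1/2" unfolding c_def by simp
    then have "c * n \<le> 1/2 * n" by (intro mult_right_mono) auto
    then have "- real n / 2 \<le> - c * n" by simp
    then show ?thesis using d0 by simp
  qed
  finally have E: "(\<Sum>j<m. infl [] ((Kop ^^ j) \<phi>) / real N) \<le> 4 * \<delta> * exp (- c * n)" .
  have Mn: "\<bar>\<Sum>\<sigma>\<in>C. mu \<sigma> * (h \<sigma> * (Kop ^^ m) \<phi> \<sigma>)\<bar> \<le> 5/2 * exp (- lam * m / (2 * N))"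
    by (rule main_term[where h=h, OF lam hb hm pb])
  have "- lam * m / (2 * N) \<le> lam / 2 + - c * n"
  proof -
    have "- lam * m \<le> - lam * (\<delta> * n * N - 1)" using m_ge lam0 by (simp add: mult_left_mono)
    then have "- lam * m / (2 * N) \<le> - lam * (\<delta> * n * N - 1) / (2 * N)" using Np by (intro divide_right_mono) auto
    also have "\<dots> = - lam * \<delta> / 2 * n + lam / (2 * N)" using Np by (simp add: field_simps)
    also have "lam / (2 * N) \<le> lam / 2"
      using lam0 Np N_pos by (intro divide_left_mono) auto
    also have "- lam * \<delta> / 2 * n \<le> - c * n" unfolding c_def by (intro mult_right_mono) auto
    finally show ?thesis by simp
  qed
  then have "exp (- lam * m / (2 * N)) \<le> exp (lam / 2) * exp (- c * n)" by (simp add: exp_add[symmetric])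
  with Mn have Mn': "\<bar>\<Sum>\<sigma>\<in>C. mu \<sigma> * (h \<sigma> * (Kop ^^ m) \<phi> \<sigma>)\<bar> \<le> 5/2 * exp (lam / 2) * exp (- c * n)" by simp
  have "\<bar>\<Sum>\<sigma>\<in>C. mu \<sigma> * (h \<sigma> * \<phi> \<sigma>)\<bar> \<le> 5/2 * exp (lam / 2) * exp (- c * n) + 4 * \<delta> * exp (- c * n)"
    using T E Mn' by linarith
  then show ?thesis unfolding c_def \<delta>_def by (simp add: algebra_simps)
qed

end

context tp begin

abbreviation "L \<equiv> level b n"
abbreviation "LC \<equiv> leaf_configs q b n"
abbreviation "J \<equiv> joint_law q M p b n"
abbreviation "Q \<equiv> leaf_law q M p b n"

lemma L_V: "L \<subseteq> V" unfolding level_def tree_vertices_def by auto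

lemma restr_LC: "\<sigma> \<in> C \<Longrightarrow> restrict \<sigma> L \<in> LC"
  unfolding leaf_configs_def using L_V C_val by (auto simp: PiE_iff)

lemma finite_LC: "finite LC"
proof -
  have "finite L" using finite_V L_V finite_subset by blast
  then show ?thesis unfolding leaf_configs_def by (intro finite_PiE) auto
qed

lemma J_nn: "0 \<le> J i x"
  unfolding joint_law_def by (intro sum_nonneg mu_nn)

lemma J_alt: "J i x = (\<Sum>\<sigma>\<in>{\<sigma>\<in>C. restrict \<sigma> L = x}. if \<sigma> [] = i then mu \<sigma> else 0)"
proof -
  have "(\<Sum>\<sigma>\<in>{\<sigma>\<in>C. restrict \<sigma> L = x}. if \<sigma> [] = i then mu \<sigma> else 0) = (\<Sum>\<sigma>\<in>{\<sigma>\<in>{\<sigma>\<in>C. restrict \<sigma> L = x}. \<sigma> [] = i}. mu \<sigma>)"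
    by (rule sum.inter_filter[symmetric]) (use finite_C in simp)
  also have "{\<sigma>\<in>{\<sigma>\<in>C. restrict \<sigma> L = x}. \<sigma> [] = i} = {\<sigma>\<in>C. \<sigma> [] = i \<and> restrict \<sigma> L = x}" by auto
  finally have X: "(\<Sum>\<sigma>\<in>{\<sigma>\<in>C. restrict \<sigma> L = x}. if \<sigma> [] = i then mu \<sigma> else 0) = (\<Sum>\<sigma>\<in>{\<sigma>\<in>C. \<sigma> [] = i \<and> restrict \<sigma> L = x}. mu \<sigma>)" .
  show ?thesis unfolding joint_law_def by (rule X[symmetric])
qed

lemma Q_alt: "Q x = (\<Sum>\<sigma>\<in>{\<sigma>\<in>C. restrict \<sigma> L = x}. mu \<sigma>)"
proof -
  have "Q x = (\<Sum>i<q. \<Sum>\<sigma>\<in>{\<sigma>\<in>C. restrict \<sigma> L = x}. if \<sigma> [] = i then mu \<sigma> else 0)"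
    unfolding leaf_law_def J_alt ..
  also have "\<dots> = (\<Sum>\<sigma>\<in>{\<sigma>\<in>C. restrict \<sigma> L = x}. \<Sum>i<q. if \<sigma> [] = i then mu \<sigma> else 0)"
    by (rule sum.swap)
  also have "\<dots> = (\<Sum>\<sigma>\<in>{\<sigma>\<in>C. restrict \<sigma> L = x}. mu \<sigma>)"
    by (intro sum.cong refl) (auto simp: C_val nil_V)
  finally show ?thesis .
qed

lemma J_le_Q: "i < q \<Longrightarrow> J i x \<le> Q x"
  unfolding leaf_law_def by (rule member_le_sum) (auto simp: J_nn)

lemma group_L: "(\<Sum>x\<in>LC. \<Sum>\<sigma>\<in>{\<sigma>\<in>C. restrict \<sigma> L = x}. F \<sigma>) = (\<Sum>\<sigma>\<in>C. F \<sigma>)"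
  by (rule sum.group[OF finite_C finite_LC]) (auto simp: restr_LC)

lemma root_law_eq: "i < q \<Longrightarrow> root_law q M p b n i = p i"
proof -
  assume i: "i < q"
  have "root_law q M p b n i = (\<Sum>x\<in>LC. \<Sum>\<sigma>\<in>{\<sigma>\<in>C. restrict \<sigma> L = x}. if \<sigma> [] = i then mu \<sigma> else 0)"
    unfolding root_law_def J_alt ..
  also have "\<dots> = (\<Sum>\<sigma>\<in>C. mu \<sigma> * (if \<sigma> [] = i then 1 else 0))" unfolding group_L by (intro sum.cong refl) auto
  also have "\<dots> = (\<Sum>k<q. p k * (if k = i then 1 else 0))" by (rule marg)
  also have "\<dots> = p i" proof -
    have "\<And>k. p k * (if k = i then 1 else 0) = (if k = i then p k else 0)" by simp
    then show ?thesis using i by (simp add: sum.delta)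
  qed
  finally show ?thesis .
qed

lemma p_le1: "i < q \<Longrightarrow> p i \<le> 1"
  using member_le_sum[of i "{..<q}" p] pnn psum by auto

lemma eps_bound:
  assumes b1: "1 \<le> b" and lam0: "0 \<le> lam"
    and lam: "\<And>f. lam * tm_variance q M p b n f \<le> dirichlet_form q M p b n f"
    and i: "i < q"
  shows "(\<Sum>x\<in>LC. \<bar>J i x - p i * Q x\<bar>) \<le> (5/2 * exp (lam / 2) + 4 * dl b) * exp (- min (lam * dl b / 2) (1/2) * n)"
proof -
  define h where "h \<sigma> = (if \<sigma> [] = i then 1 else 0) - p i" for \<sigma> :: "nat list \<Rightarrow> nat"
  define s where "s x = sgn (J i x - p i * Q x)" for x
  define \<phi> where "\<phi> \<sigma> = s (restrict \<sigma> L)" for \<sigma> :: "nat list \<Rightarrow> nat"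
  have pi: "0 \<le> p i" "p i \<le> 1" using pnn[OF i] p_le1[OF i] by auto
  have hinv: "\<And>\<sigma> v a. \<sigma> \<in> C \<Longrightarrow> v \<in> V \<Longrightarrow> v \<noteq> [] \<Longrightarrow> a < q \<Longrightarrow> h (\<sigma>(v := a)) = h \<sigma>"
    unfolding h_def by auto
  have hb: "\<And>\<sigma>. \<sigma> \<in> C \<Longrightarrow> \<bar>h \<sigma>\<bar> \<le> 1" unfolding h_def using pi by auto
  have hm: "(\<Sum>\<sigma>\<in>C. mu \<sigma> * h \<sigma>) = 0"
  proof -
    have "(\<Sum>\<sigma>\<in>C. mu \<sigma> * h \<sigma>) = (\<Sum>\<sigma>\<in>C. mu \<sigma> * (if \<sigma> [] = i then 1 else 0)) - (\<Sum>\<sigma>\<in>C. mu \<sigma>) * p i"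
      unfolding h_def by (simp add: right_diff_distrib sum_subtractf sum_distrib_right)
    also have "(\<Sum>\<sigma>\<in>C. mu \<sigma> * (if \<sigma> [] = i then 1 else 0)) = (\<Sum>k<q. p k * (if k = i then 1 else 0))" by (rule marg)
    also have "\<dots> = p i" proof -
    have "\<And>k. p k * (if k = i then 1 else 0) = (if k = i then p k else 0)" by simp
    then show ?thesis using i by (simp add: sum.delta)
  qed
    finally show ?thesis using mu_total by simp
  qed
  have pb: "\<And>\<sigma>. \<sigma> \<in> C \<Longrightarrow> \<bar>\<phi> \<sigma>\<bar> \<le> 1" unfolding \<phi>_def s_def by (simp add: abs_sgn_eq)
  have phi_l: "\<And>\<sigma> u a. \<sigma> \<in> C \<Longrightarrow> u \<in> V \<Longrightarrow> length u < n \<Longrightarrow> a < q \<Longrightarrow> \<phi> (\<sigma>(u := a)) = \<phi> \<sigma>"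
  proof -
    fix \<sigma> :: "nat list \<Rightarrow> nat" and u :: "nat list" and a :: nat assume "length u < n"
    then have "u \<notin> L" unfolding level_def by auto
    then have "restrict (\<sigma>(u := a)) L = restrict \<sigma> L" by (auto simp: restrict_def fun_eq_iff)
    then show "\<phi> (\<sigma>(u := a)) = \<phi> \<sigma>" unfolding \<phi>_def by simp
  qed
  have "(\<Sum>\<sigma>\<in>C. mu \<sigma> * (h \<sigma> * \<phi> \<sigma>)) = (\<Sum>x\<in>LC. \<Sum>\<sigma>\<in>{\<sigma>\<in>C. restrict \<sigma> L = x}. mu \<sigma> * (h \<sigma> * \<phi> \<sigma>))"
    by (rule group_L[symmetric])
  also have "\<dots> = (\<Sum>x\<in>LC. s x * (J i x - p i * Q x))"
  proof (intro sum.cong refl)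
    fix x assume x: "x \<in> LC"
    have "(\<Sum>\<sigma>\<in>{\<sigma>\<in>C. restrict \<sigma> L = x}. mu \<sigma> * (h \<sigma> * \<phi> \<sigma>))
        = (\<Sum>\<sigma>\<in>{\<sigma>\<in>C. restrict \<sigma> L = x}. s x * ((if \<sigma> [] = i then mu \<sigma> else 0) - p i * mu \<sigma>))"
      by (intro sum.cong refl) (auto simp: h_def \<phi>_def algebra_simps)
    also have "\<dots> = s x * (J i x - p i * Q x)"
      unfolding J_alt Q_alt by (simp add: sum_distrib_left[symmetric] sum_subtractf right_diff_distrib)
    finally show "(\<Sum>\<sigma>\<in>{\<sigma>\<in>C. restrict \<sigma> L = x}. mu \<sigma> * (h \<sigma> * \<phi> \<sigma>)) = s x * (J i x - p i * Q x)" .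
  qed
  also have "\<dots> = (\<Sum>x\<in>LC. \<bar>J i x - p i * Q x\<bar>)"
    unfolding s_def by (intro sum.cong refl) (simp add: sgn_mult_abs abs_sgn mult.commute)
  finally have e: "(\<Sum>\<sigma>\<in>C. mu \<sigma> * (h \<sigma> * \<phi> \<sigma>)) = (\<Sum>x\<in>LC. \<bar>J i x - p i * Q x\<bar>)" .
  have "\<bar>\<Sum>\<sigma>\<in>C. mu \<sigma> * (h \<sigma> * \<phi> \<sigma>)\<bar> \<le> (5/2 * exp (lam / 2) + 4 * dl b) * exp (- min (lam * dl b / 2) (1/2) * n)"
    by (rule cov_bound[where h=h and \<phi>=\<phi>, OF b1 lam0 lam hinv hb hm pb phi_l])
  then show ?thesis unfolding e by simp
qed


lemma term_bound:
  assumes i: "i < q" and R0: "0 < p i"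
  shows "(let Jv = J i x in if Jv = 0 then 0 else Jv * ln (Jv / (root_law q M p b n i * Q x)))
         \<le> \<bar>J i x - p i * Q x\<bar> / p i + (J i x - p i * Q x)"
proof -
  define Jv where "Jv = J i x"
  define R where "R = p i"
  define Qx where "Qx = Q x"
  define d where "d = Jv - R * Qx"
  have R1: "R \<le> 1" unfolding R_def by (rule p_le1[OF i])
  have Rp: "0 < R" unfolding R_def by (rule R0)
  have J0: "0 \<le> Jv" unfolding Jv_def by (rule J_nn)
  have JQ: "Jv \<le> Qx" unfolding Jv_def Qx_def by (rule J_le_Q[OF i])
  have rl: "root_law q M p b n i = R" unfolding R_def by (rule root_law_eq[OF i])
  show ?thesis unfolding Jv_def[symmetric] Qx_def[symmetric] R_def[symmetric] rl Let_def d_def[symmetric]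
  proof (cases "Jv = 0")
    case True
    have "0 \<le> Qx" using J0 JQ by simp
    then have "0 \<le> R * Qx" using Rp by simp
    then have "\<bar>d\<bar> = R * Qx" unfolding d_def True by simp
    moreover have "R * Qx \<le> Qx" using mult_right_mono[OF R1 \<open>0 \<le> Qx\<close>] by simp
    ultimately have "0 \<le> \<bar>d\<bar> / R + d" unfolding d_def True using Rp by simp
    then show "(if Jv = 0 then 0 else Jv * ln (Jv / (R * Qx))) \<le> \<bar>d\<bar> / R + d" using True by simp
  next
    case False
    then have Jp: "0 < Jv" using J0 by simp
    then have Qp: "0 < Qx" using JQ by simp
    define y where "y = Jv / (R * Qx)"
    have yp: "0 < y" unfolding y_def using Jp Qp Rp by simp
    have y_le: "y \<le> 1 / R"
    proof -
      have "y = (Jv / Qx) / R" unfolding y_def by simp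
      also have "Jv / Qx \<le> 1" using JQ Qp by simp
      then have "(Jv / Qx) / R \<le> 1 / R" using Rp by (intro divide_right_mono) auto
      finally show ?thesis .
    qed
    have oneR: "1 \<le> 1 / R" using Rp R1 by simp
    have "Jv * ln y \<le> Jv * (y - 1)" using ln_le_minus_one[OF yp] Jp by (intro mult_left_mono) auto
    also have "Jv * (y - 1) = d + d * (y - 1)"
      unfolding y_def d_def using Rp Qp by (simp add: field_simps)
    also have "d * (y - 1) \<le> \<bar>d\<bar> * (1 / R)"
    proof -
      have "\<bar>y - 1\<bar> \<le> 1 / R" using y_le yp oneR by linarith
      then have "\<bar>d\<bar> * \<bar>y - 1\<bar> \<le> \<bar>d\<bar> * (1 / R)" by (intro mult_left_mono) auto
      moreover have "d * (y - 1) \<le> \<bar>d\<bar> * \<bar>y - 1\<bar>" by (metis abs_ge_self abs_mult)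
      ultimately show ?thesis by linarith
    qed
    finally have "Jv * ln y \<le> \<bar>d\<bar> / R + d" by simp
    then show "(if Jv = 0 then 0 else Jv * ln (Jv / (R * Qx))) \<le> \<bar>d\<bar> / R + d"
      using False unfolding y_def by simp
  qed
qed

lemma MI_bound:
  assumes ppos: "\<And>i. i < q \<Longrightarrow> 0 < p i"
  shows "mutual_info q M p b n \<le> (\<Sum>i<q. (\<Sum>x\<in>LC. \<bar>J i x - p i * Q x\<bar>) / p i)"
proof -
  have "mutual_info q M p b n \<le> (\<Sum>i<q. \<Sum>x\<in>LC. \<bar>J i x - p i * Q x\<bar> / p i + (J i x - p i * Q x))"
    unfolding mutual_info_def by (intro sum_mono term_bound ppos) auto
  also have "\<dots> = (\<Sum>i<q. (\<Sum>x\<in>LC. \<bar>J i x - p i * Q x\<bar>) / p i) + (\<Sum>i<q. \<Sum>x\<in>LC. J i x - p i * Q x)"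
    by (simp add: sum.distrib sum_divide_distrib)
  also have "(\<Sum>i<q. \<Sum>x\<in>LC. J i x - p i * Q x) = 0"
  proof -
    have "(\<Sum>i<q. \<Sum>x\<in>LC. J i x - p i * Q x) = (\<Sum>x\<in>LC. \<Sum>i<q. J i x - p i * Q x)" by (rule sum.swap)
    also have "\<dots> = (\<Sum>x\<in>LC. Q x - (\<Sum>i<q. p i) * Q x)"
      unfolding leaf_law_def by (simp add: sum_subtractf sum_distrib_right)
    also have "\<dots> = 0" using psum by simp
    finally show ?thesis .
  qed
  finally show ?thesis by simp
qed

lemma tv_bound:
  assumes ppos: "\<And>i. i < q \<Longrightarrow> 0 < p i" and i: "i < q" and j: "j < q"
  shows "tv_dist q M p b n i j \<le> ((\<Sum>x\<in>LC. \<bar>J i x - p i * Q x\<bar>) / p i + (\<Sum>x\<in>LC. \<bar>J j x - p j * Q x\<bar>) / p j) / 2"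
proof -
  have pi: "0 < p i" and pj: "0 < p j" using ppos i j by auto
  have "(\<Sum>x\<in>LC. \<bar>cond_leaf_law q M p b n i x - cond_leaf_law q M p b n j x\<bar>)
      \<le> (\<Sum>x\<in>LC. \<bar>J i x - p i * Q x\<bar> / p i + \<bar>J j x - p j * Q x\<bar> / p j)"
  proof (intro sum_mono)
    fix x
    have "cond_leaf_law q M p b n i x = J i x / p i" "cond_leaf_law q M p b n j x = J j x / p j"
      unfolding cond_leaf_law_def using root_law_eq i j by auto
    moreover have "\<bar>J i x / p i - Q x\<bar> = \<bar>J i x - p i * Q x\<bar> / p i"
    proof -
      have "J i x / p i - Q x = (J i x - p i * Q x) / p i" using pi by (simp add: field_simps)
      then show ?thesis using pi by simp
    qed
    moreover have "\<bar>J j x / p j - Q x\<bar> = \<bar>J j x - p j * Q x\<bar> / p j"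
    proof -
      have "J j x / p j - Q x = (J j x - p j * Q x) / p j" using pj by (simp add: field_simps)
      then show ?thesis using pj by simp
    qed
    ultimately show "\<bar>cond_leaf_law q M p b n i x - cond_leaf_law q M p b n j x\<bar> \<le> \<bar>J i x - p i * Q x\<bar> / p i + \<bar>J j x - p j * Q x\<bar> / p j"
      by (smt (verit))
  qed
  also have "\<dots> = (\<Sum>x\<in>LC. \<bar>J i x - p i * Q x\<bar>) / p i + (\<Sum>x\<in>LC. \<bar>J j x - p j * Q x\<bar>) / p j"
    by (simp add: sum.distrib sum_divide_distrib)
  finally show ?thesis unfolding tv_dist_def by simp
qed

end

lemma mpow_nn: "stochastic q M \<Longrightarrow> i < q \<Longrightarrow> j < q \<Longrightarrow> 0 \<le> mpow q M k i j"
proof (induction k arbitrary: j)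
  case (Suc k)
  have "0 \<le> mpow q M k i l * M l j" if "l \<in> {..<q}" for l
    using Suc.IH[of l] Suc.prems that unfolding stochastic_def by (intro mult_nonneg_nonneg) auto
  then have "0 \<le> (\<Sum>l<q. mpow q M k i l * M l j)" by (intro sum_nonneg) auto
  then show ?case by simp
qed simp

lemma mpow_stat:
  assumes st: "stationary_dist q M p" and j: "j < q"
  shows "(\<Sum>i<q. p i * mpow q M k i j) = p j"
  using j
proof (induction k arbitrary: j)
  case 0
  have "\<And>i. p i * (if i = j then 1 else 0) = (if i = j then p i else 0)" by simp
  then show ?case using 0 by (simp add: sum.delta)
next
  case (Suc k)
  have "(\<Sum>i<q. p i * mpow q M (Suc k) i j) = (\<Sum>i<q. \<Sum>l<q. p i * mpow q M k i l * M l j)"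
    by (simp add: sum_distrib_left mult.assoc)
  also have "\<dots> = (\<Sum>l<q. (\<Sum>i<q. p i * mpow q M k i l) * M l j)"
    by (subst sum.swap) (simp add: sum_distrib_right)
  also have "\<dots> = (\<Sum>l<q. p l * M l j)" using Suc.IH by simp
  also have "\<dots> = p j" using st Suc.prems unfolding stationary_dist_def by simp
  finally show ?case .
qed

lemma p_pos:
  assumes erg: "ergodic_channel q M" and st: "stationary_dist q M p" and j: "j < q"
  shows "0 < p j"
proof -
  have stoch: "stochastic q M" and irr: "irreducible_chain q M" using erg unfolding ergodic_channel_def by auto
  have pnn: "\<And>i. i < q \<Longrightarrow> 0 \<le> p i" and ps: "(\<Sum>i<q. p i) = 1" using st unfolding stationary_dist_def by auto
  obtain i where i: "i < q" "0 < p i"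
  proof (rule ccontr)
    assume "\<not> thesis"
    then have "\<And>i. i < q \<Longrightarrow> p i \<le> 0" using that by force
    then have "(\<Sum>i<q. p i) \<le> 0" by (intro sum_nonpos) auto
    with ps show False by simp
  qed
  obtain k where k: "0 < mpow q M k i j" using irr i j unfolding irreducible_chain_def by blast
  have "p i * mpow q M k i j \<le> (\<Sum>i<q. p i * mpow q M k i j)"
    by (rule member_le_sum) (use i pnn mpow_nn[OF stoch] j in auto)
  also have "\<dots> = p j" by (rule mpow_stat[OF st j])
  finally show ?thesis using i k by (smt (verit) mult_pos_pos)
qed

lemma gap_ineq:
  assumes tpn: "tp q M p"
  shows "(INF k. spectral_gap q M p b k) * tm_variance q M p b n f \<le> dirichlet_form q M p b n f"
proof -
  define S where "S k = {dirichlet_form q M p b k g / tm_variance q M p b k g | g. 0 < tm_variance q M p b k g}" for k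
  have gapS: "spectral_gap q M p b k = Inf (S k)" for k unfolding spectral_gap_def S_def ..
  have Snn: "\<And>x. x \<in> S k \<Longrightarrow> 0 \<le> x" for k
    unfolding S_def using tp.dir_nn[OF tpn] by (auto intro!: divide_nonneg_nonneg)
  have lb: "min 0 (Inf ({}::real set)) \<le> spectral_gap q M p b k" for k
  proof (cases "S k = {}")
    case True
    then show ?thesis unfolding gapS by simp
  next
    case False
    then have "0 \<le> Inf (S k)" using Snn by (intro cInf_greatest) auto
    then show ?thesis unfolding gapS by simp
  qed
  have bdd: "bdd_below (range (spectral_gap q M p b))" using lb by (intro bdd_belowI2) 
  have le: "(INF k. spectral_gap q M p b k) \<le> spectral_gap q M p b n" by (rule cINF_lower[OF bdd]) simp
  have V0: "0 \<le> tm_variance q M p b n f"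
    unfolding tm_variance_def using tp.mu_nn[OF tpn] by (intro sum_nonneg mult_nonneg_nonneg) auto
  show ?thesis
  proof (cases "tm_variance q M p b n f = 0")
    case True
    then show ?thesis using tp.dir_nn[OF tpn] by simp
  next
    case False
    then have Vp: "0 < tm_variance q M p b n f" using V0 by simp
    have mem: "dirichlet_form q M p b n f / tm_variance q M p b n f \<in> S n" unfolding S_def using Vp by blast
    have "spectral_gap q M p b n \<le> dirichlet_form q M p b n f / tm_variance q M p b n f"
    proof -
      have "bdd_below (S n)" using Snn by (intro bdd_belowI[where m=0]) auto
      then show ?thesis unfolding gapS by (rule cInf_lower[OF mem])
    qed
    with le have "(INF k. spectral_gap q M p b k) \<le> dirichlet_form q M p b n f / tm_variance q M p b n f" by simp
    then have "(INF k. spectral_gap q M p b k) * tm_variance q M p b n f \<le> dirichlet_form q M p b n f / tm_variance q M p b n f * tm_variance q M p b n f"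
      using Vp by (intro mult_right_mono) auto
    then show ?thesis using Vp by simp
  qed
qed


theorem theorem6p4:
  fixes q b :: nat and M :: "nat \<Rightarrow> nat \<Rightarrow> real" and p :: "nat \<Rightarrow> real"
  assumes "1 \<le> b"
    and "ergodic_channel q M"
    and "stationary_dist q M p"
    and "(INF n. spectral_gap q M p b n) > 0"
  shows "(\<exists>C>0. \<exists>c>0. \<forall>n. mutual_info q M p b n \<le> C * exp (- c * real n))
         \<and> \<not> reconstruction_solvable q M p b"
proof -
  note b1 = assms(1) and erg = assms(2) and st = assms(3)
  define lam where "lam = (INF n. spectral_gap q M p b n)"
  have lam0: "0 < lam" using assms(4) unfolding lam_def .
  have stoch: "stochastic q M" using erg unfolding ergodic_channel_def by auto
  have tpi: "tp q M p"
    using stoch st unfolding stationary_dist_def by unfold_locales auto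
  have ppos: "\<And>i. i < q \<Longrightarrow> 0 < p i" using p_pos[OF erg st] .
  have gap: "\<And>n f. lam * tm_variance q M p b n f \<le> dirichlet_form q M p b n f"
    unfolding lam_def by (rule gap_ineq[OF tpi])
  define K where "K = 5/2 * exp (lam / 2) + 4 * dl b"
  define c where "c = min (lam * dl b / 2) (1/2)"
  have K0: "0 < K" unfolding K_def using tp.dl_pos[OF tpi b1] by (intro add_pos_pos) auto
  have c0: "0 < c" unfolding c_def using lam0 tp.dl_pos[OF tpi b1] by simp
  have eps: "\<And>n i. i < q \<Longrightarrow> (\<Sum>x\<in>leaf_configs q b n. \<bar>joint_law q M p b n i x - p i * leaf_law q M p b n x\<bar>) \<le> K * exp (- c * n)"
    unfolding K_def c_def using tp.eps_bound[OF tpi b1 _ gap] lam0 by simp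
  define C0 where "C0 = (\<Sum>i<q. 1 / p i) * K + 1"
  have C00: "0 < C0"
  proof -
    have "0 \<le> (\<Sum>i<q. 1 / p i)" using ppos by (intro sum_nonneg) (simp add: less_imp_le)
    then have "0 \<le> (\<Sum>i<q. 1 / p i) * K" using K0 by simp
    then show ?thesis unfolding C0_def by linarith
  qed
  have MI: "mutual_info q M p b n \<le> C0 * exp (- c * real n)" for n
  proof -
    have "mutual_info q M p b n \<le> (\<Sum>i<q. (\<Sum>x\<in>leaf_configs q b n. \<bar>joint_law q M p b n i x - p i * leaf_law q M p b n x\<bar>) / p i)"
      by (rule tp.MI_bound[OF tpi ppos])
    also have "\<dots> \<le> (\<Sum>i<q. K * exp (- c * n) / p i)"
      using eps ppos by (intro sum_mono divide_right_mono) (auto simp: less_imp_le)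
    also have "\<dots> = (\<Sum>i<q. 1 / p i) * K * exp (- c * n)"
      by (simp add: sum_distrib_right sum_divide_distrib[symmetric])
    also have "\<dots> \<le> C0 * exp (- c * n)" unfolding C0_def by (simp add: distrib_right)
    finally show ?thesis .
  qed
  have NR: "\<not> reconstruction_solvable q M p b"
  proof
    assume "reconstruction_solvable q M p b"
    then obtain i j L where ij: "i < q" "j < q" and L0: "0 < L" and lim: "(\<lambda>n. tv_dist q M p b n i j) \<longlonglongrightarrow> L"
      unfolding reconstruction_solvable_def by blast
    define B where "B = (1 / p i + 1 / p j) / 2 * K"
    have ub: "tv_dist q M p b n i j \<le> B * exp (- c * n)" for n
    proof -
      have "tv_dist q M p b n i j \<le> ((\<Sum>x\<in>leaf_configs q b n. \<bar>joint_law q M p b n i x - p i * leaf_law q M p b n x\<bar>) / p i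
           + (\<Sum>x\<in>leaf_configs q b n. \<bar>joint_law q M p b n j x - p j * leaf_law q M p b n x\<bar>) / p j) / 2"
        by (rule tp.tv_bound[OF tpi ppos ij])
      also have "\<dots> \<le> (K * exp (- c * n) / p i + K * exp (- c * n) / p j) / 2"
        using eps[OF ij(1), of n] eps[OF ij(2), of n] ppos[OF ij(1)] ppos[OF ij(2)]
        by (intro divide_right_mono add_mono) auto
      also have "\<dots> = B * exp (- c * n)" unfolding B_def by (simp add: field_simps)
      finally show ?thesis .
    qed
    have lb: "0 \<le> tv_dist q M p b n i j" for n
      unfolding tv_dist_def by (intro mult_nonneg_nonneg sum_nonneg) auto
    have e0: "(\<lambda>n. exp (- c * real n)) \<longlonglongrightarrow> 0"
    proof -
      have "(\<lambda>n. exp (- c * real n)) = (\<lambda>n. exp (- c) ^ n)"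
        by (rule ext) (simp add: exp_of_nat_mult[symmetric] mult.commute)
      moreover have "(\<lambda>n. exp (- c) ^ n) \<longlonglongrightarrow> 0" using c0 by (intro LIMSEQ_power_zero) simp
      ultimately show ?thesis by simp
    qed
    have "(\<lambda>n. B * exp (- c * real n)) \<longlonglongrightarrow> 0" using tendsto_mult_right_zero[OF e0, of B] by simp
    moreover have "eventually (\<lambda>n. (0::real) \<le> tv_dist q M p b n i j) sequentially" using lb by simp
    moreover have "eventually (\<lambda>n. tv_dist q M p b n i j \<le> B * exp (- c * real n)) sequentially" using ub by simp
    ultimately have "(\<lambda>n. tv_dist q M p b n i j) \<longlonglongrightarrow> 0"
      using tendsto_sandwich[of "\<lambda>_. 0" "\<lambda>n. tv_dist q M p b n i j" sequentially "\<lambda>n. B * exp (- c * real n)" 0] by auto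
    with lim have "L = 0" by (rule LIMSEQ_unique)
    with L0 show False by simp
  qed
  show ?thesis using MI C00 c0 NR by blast
qed

end
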